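(* Consider the procedure "Boosting Using SDP" with inputs $\hat A\in\mathbb R^{n\times n}$, parameters $0<\zeta<1$, $d>0$, $K\ge10^4$, and an initial labelling $\ell_{\mathrm{init}}\in\{-1,1\}^n$: set $\ell\leftarrow\ell_{\mathrm{init}}$; then $\lceil10\log n\rceil$ times, compute an optimal solution of the Boosting SDP with inputs $\hat A,\ell,\zeta,d,K$, flip the sign of $\ell_i$ for every $i$ with $w_i\ge1-1/\sqrt K$, and replace $\ell$ by the result; output $\ell$. Suppose there are a subset $S\subseteq[n]$ with $|S|\ge(1-\gamma)n$ where $\gamma\le0.1\zeta$, an $n\times n$ matrix $F$, and a labelling $\tilde\ell\in\{-1,1\}^n$ with $\tilde L=\tilde\ell\tilde\ell^T$ such that: (1) $\ell_{\mathrm{init}}$ agrees with $\tilde\ell$ on at least $(1-0.1\zeta)n$ coordinates; (2) $(F\odot\tilde L)_{S\times S}$ is entrywise nonnegative; (3) $(\hat A-F)_{S\times S}=Y+Z$ with $\|Y\|_{\mathrm{op}}\le Kd$ and $|Z_{ij}|\le Kd/(\zeta n)$ for all $i,j$; (4) for every $T\subseteq S$ with $|T|\ge(1-\zeta)n$, the matrix $((\hat A-F)\odot\tilde L)_{T\times T}$ is resolvable with parameters $\big(10dK^3,\ 0.5dK(\gamma+\frac{n-|T|}{n})\big)$. Then the output agrees with $\tilde\ell$ on at least $(1-8\gamma)n$ coordinates.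
   Context: Notation: $J$ all-ones matrix, $\odot$ entrywise product, $\langle X,Y\rangle=\sum_{ij}X_{ij}Y_{ij}$, $\|\cdot\|_1$ trace norm, $\|\cdot\|_{\mathrm{op}}$ operator norm, $M_{S\times T}$ submatrix indexed by $S\times T$. Resolvability: an $m\times m$ matrix $X$ is $(d_1,d_2)$-resolvable if for all $x_1,\dots,x_m\in[0,1]$ with $\sum_ix_i\le10^{-6}m$, $\langle X,Y_x\rangle\ge d_1\sum_ix_i-d_2m$, where $(Y_x)_{ij}=x_i$. Pseudorectangles: $\mathcal R_n(\theta)$ is the set of $n\times n$ matrices $M$ with $0\le M_{ij}\le1$, $\sum_{ij}|M_{ij}|\le\theta^2n^2$, $\|M\|_1\le\theta n$. Approximate row selectors: $(M,x_1,\dots,x_n)\in\mathcal S_n(\theta,\delta)$ if $0\le M_{ij}\le1$, $0\le x_i\le1$, $\sum_ix_i\le\theta n$, and $M=Y_x-N$ for some $N\in\mathcal R_n(\sqrt{\theta\delta})$. Boosting SDP (inputs $\hat A,\ell$, parameters $\zeta,d,K$ with $0<\zeta<1$, $K\ge10^4$): variables $\rho\in[0,\zeta]$, $w\in\mathbb R^n$, $W\in\mathbb R^{n\times n}$, $N\in\mathcal R_n(\rho)$ with $0\le w_i\le1$, $\sum_iw_i\le\rho n$, $W_{ij}\ge0$, $W_{ij}=1-w_i-w_j+N_{ij}$ for all $i,j$, and for every $\rho'$ with $\rho/K\le\rho'\le\zeta$ and every $(M,x)\in\mathcal S_n(\rho',K\rho')$: $\langle\hat A\odot L\odot W,M\rangle\ge10dK^2\big(K\sum_ix_i(1-w_i)-\rho'n\big)$,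 where $L=\ell\ell^T$. Objective: minimize $\rho$. *)

theory Defs
  imports Complex_Main
begin

text \<open>Conventions: n x n matrices are functions nat => nat => real, only entries with
indices < n matter; vectors/labellings are nat => real, only indices < n matter.
The index set [n] is {..<n}.\<close>

definition trace_norm :: "nat \<Rightarrow> (nat \<Rightarrow> nat \<Rightarrow> real) \<Rightarrow> real" where
  "trace_norm n M = (THE s. \<exists>U V \<sigma>.
      (\<forall>i<n. \<forall>j<n. (\<Sum>k<n. U k i * U k j) = (if i = j then 1 else 0)) \<and>
      (\<forall>i<n. \<forall>j<n. (\<Sum>k<n. V k i * V k j) = (if i = j then 1 else 0)) \<and>
      (\<forall>k<n. 0 \<le> \<sigma> k) \<and>
      (\<forall>i<n. \<forall>j<n. M i j = (\<Sum>k<n. U i k * \<sigma> k * V j k)) \<and>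
      s = (\<Sum>k<n. \<sigma> k))"

definition op_norm_on :: "nat set \<Rightarrow> (nat \<Rightarrow> nat \<Rightarrow> real) \<Rightarrow> real" where
  "op_norm_on I M = Sup {sqrt (\<Sum>i\<in>I. (\<Sum>j\<in>I. M i j * x j)^2) | x.
                         (\<Sum>j\<in>I. (x j)^2) \<le> 1}"

definition resolvable_on :: "nat set \<Rightarrow> (nat \<Rightarrow> nat \<Rightarrow> real) \<Rightarrow> real \<Rightarrow> real \<Rightarrow> bool" where
  "resolvable_on T X d1 d2 \<longleftrightarrow>
     (\<forall>x :: nat \<Rightarrow> real. (\<forall>i\<in>T. 0 \<le> x i \<and> x i \<le> 1) \<and>
        (\<Sum>i\<in>T. x i) \<le> 10 powi (-6) * real (card T) \<longrightarrow>
        (\<Sum>i\<in>T. \<Sum>j\<in>T. X i j * x i) \<ge> d1 * (\<Sum>i\<in>T. x i) - d2 * real (card T))"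

definition pseudorect :: "nat \<Rightarrow> real \<Rightarrow> (nat \<Rightarrow> nat \<Rightarrow> real) \<Rightarrow> bool" where
  "pseudorect n \<theta> M \<longleftrightarrow>
     (\<forall>i<n. \<forall>j<n. 0 \<le> M i j \<and> M i j \<le> 1) \<and>
     (\<Sum>i<n. \<Sum>j<n. \<bar>M i j\<bar>) \<le> \<theta>^2 * (real n)^2 \<and>
     trace_norm n M \<le> \<theta> * real n"

definition row_selector :: "nat \<Rightarrow> real \<Rightarrow> real \<Rightarrow> (nat \<Rightarrow> nat \<Rightarrow> real) \<Rightarrow> (nat \<Rightarrow> real) \<Rightarrow> bool" where
  "row_selector n \<theta> \<delta> M x \<longleftrightarrow>
     (\<forall>i<n. \<forall>j<n. 0 \<le> M i j \<and> M i j \<le> 1) \<and>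
     (\<forall>i<n. 0 \<le> x i \<and> x i \<le> 1) \<and>
     (\<Sum>i<n. x i) \<le> \<theta> * real n \<and>
     (\<exists>N. pseudorect n (sqrt (\<theta> * \<delta>)) N \<and> (\<forall>i<n. \<forall>j<n. M i j = x i - N i j))"

definition boost_feasible ::
  "nat \<Rightarrow> (nat \<Rightarrow> nat \<Rightarrow> real) \<Rightarrow> (nat \<Rightarrow> real) \<Rightarrow> real \<Rightarrow> real \<Rightarrow> real \<Rightarrow>
   real \<Rightarrow> (nat \<Rightarrow> real) \<Rightarrow> (nat \<Rightarrow> nat \<Rightarrow> real) \<Rightarrow> (nat \<Rightarrow> nat \<Rightarrow> real) \<Rightarrow> bool" where
  "boost_feasible n A l \<zeta> d K \<rho> w W N \<longleftrightarrow>
     0 \<le> \<rho> \<and> \<rho> \<le> \<zeta> \<and> pseudorect n \<rho> N \<and>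
     (\<forall>i<n. 0 \<le> w i \<and> w i \<le> 1) \<and> (\<Sum>i<n. w i) \<le> \<rho> * real n \<and>
     (\<forall>i<n. \<forall>j<n. 0 \<le> W i j \<and> W i j = 1 - w i - w j + N i j) \<and>
     (\<forall>\<rho>' M x. \<rho> / K \<le> \<rho>' \<and> \<rho>' \<le> \<zeta> \<and> row_selector n \<rho>' (K * \<rho>') M x \<longrightarrow>
        (\<Sum>i<n. \<Sum>j<n. A i j * (l i * l j) * W i j * M i j)
          \<ge> 10 * d * K^2 * (K * (\<Sum>i<n. x i * (1 - w i)) - \<rho>' * real n))"

definition boost_optimal ::
  "nat \<Rightarrow> (nat \<Rightarrow> nat \<Rightarrow> real) \<Rightarrow> (nat \<Rightarrow> real) \<Rightarrow> real \<Rightarrow> real \<Rightarrow> real \<Rightarrow>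
   real \<Rightarrow> (nat \<Rightarrow> real) \<Rightarrow> (nat \<Rightarrow> nat \<Rightarrow> real) \<Rightarrow> (nat \<Rightarrow> nat \<Rightarrow> real) \<Rightarrow> bool" where
  "boost_optimal n A l \<zeta> d K \<rho> w W N \<longleftrightarrow>
     boost_feasible n A l \<zeta> d K \<rho> w W N \<and>
     (\<forall>\<rho>2 w2 W2 N2. boost_feasible n A l \<zeta> d K \<rho>2 w2 W2 N2 \<longrightarrow> \<rho> \<le> \<rho>2)"

definition boost_step ::
  "nat \<Rightarrow> (nat \<Rightarrow> nat \<Rightarrow> real) \<Rightarrow> real \<Rightarrow> real \<Rightarrow> real \<Rightarrow> (nat \<Rightarrow> real) \<Rightarrow> (nat \<Rightarrow> real) \<Rightarrow> bool" where
  "boost_step n A \<zeta> d K l l' \<longleftrightarrow>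
     (\<exists>\<rho> w W N. boost_optimal n A l \<zeta> d K \<rho> w W N \<and>
        (\<forall>i<n. l' i = (if w i \<ge> 1 - 1 / sqrt K then - l i else l i)))"

text \<open>l_out is a possible output of "Boosting Using SDP" (for some choice of optimal
solutions in each of the ceil(10 log n) rounds).\<close>
definition boosting_output ::
  "nat \<Rightarrow> (nat \<Rightarrow> nat \<Rightarrow> real) \<Rightarrow> real \<Rightarrow> real \<Rightarrow> real \<Rightarrow> (nat \<Rightarrow> real) \<Rightarrow> (nat \<Rightarrow> real) \<Rightarrow> bool" where
  "boosting_output n A \<zeta> d K linit lout \<longleftrightarrow>
     (\<exists>seq :: nat \<Rightarrow> nat \<Rightarrow> real.
        (\<forall>i<n. seq 0 i = linit i) \<and>
        (\<forall>t < nat \<lceil>10 * ln (real n)\<rceil>. boost_step n A \<zeta> d K (seq t) (seq (Suc t))) \<and>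
        (\<forall>i<n. lout i = seq (nat \<lceil>10 * ln (real n)\<rceil>) i))"

definition is_labelling :: "nat \<Rightarrow> (nat \<Rightarrow> real) \<Rightarrow> bool" where
  "is_labelling n l \<longleftrightarrow> (\<forall>i<n. l i = 1 \<or> l i = -1)"

definition agreements :: "nat \<Rightarrow> (nat \<Rightarrow> real) \<Rightarrow> (nat \<Rightarrow> real) \<Rightarrow> nat" where
  "agreements n l l' = card {i. i < n \<and> l i = l' i}"

end

theory Submission
  imports Defs "HOL-Analysis.Analysis"
begin

definition orthm :: "nat \<Rightarrow> (nat \<Rightarrow> nat \<Rightarrow> real) \<Rightarrow> bool" where
  "orthm n U \<longleftrightarrow> (\<forall>i<n. \<forall>j<n. (\<Sum>k<n. U k i * U k j) = (if i = j then 1 else 0))"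

definition svd :: "nat \<Rightarrow> (nat \<Rightarrow> nat \<Rightarrow> real) \<Rightarrow> (nat \<Rightarrow> nat \<Rightarrow> real) \<Rightarrow> (nat \<Rightarrow> nat \<Rightarrow> real) \<Rightarrow> (nat \<Rightarrow> real) \<Rightarrow> bool" where
  "svd n M U V \<sigma> \<longleftrightarrow> orthm n U \<and> orthm n V \<and> (\<forall>k<n. 0 \<le> \<sigma> k) \<and>
      (\<forall>i<n. \<forall>j<n. M i j = (\<Sum>k<n. U i k * \<sigma> k * V j k))"

lemma sum_cmul3: "(\<Sum>k\<in>I. (c::real) * f k * g k) = c * (\<Sum>k\<in>I. f k * g k)"
  by (simp add: sum_distrib_left mult.assoc)

lemma bessel:
  assumes "orthm n U"
  shows "(\<Sum>k<n. (\<Sum>i<n. U i k * a i)^2) \<le> (\<Sum>i<n. (a i)^2)"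
proof -
  define c where "c k = (\<Sum>i<n. U i k * a i)" for k
  have cross: "(\<Sum>i<n. a i * (\<Sum>k<n. c k * U i k)) = (\<Sum>k<n. (c k)^2)"
  proof -
    have "(\<Sum>i<n. a i * (\<Sum>k<n. c k * U i k)) = (\<Sum>i<n. \<Sum>k<n. c k * (U i k * a i))"
      by (simp add: sum_distrib_left mult_ac)
    also have "\<dots> = (\<Sum>k<n. \<Sum>i<n. c k * (U i k * a i))" by (rule sum.swap)
    also have "\<dots> = (\<Sum>k<n. (c k)^2)" by (simp add: c_def sum_distrib_left power2_eq_square)
    finally show ?thesis .
  qed
  have sq: "(\<Sum>i<n. (\<Sum>k<n. c k * U i k)^2) = (\<Sum>k<n. (c k)^2)"
  proof -
    have "(\<Sum>i<n. (\<Sum>k<n. c k * U i k)^2) = (\<Sum>i<n. \<Sum>k<n. \<Sum>l<n. c k * c l * (U i k * U i l))"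
      by (simp add: power2_eq_square sum_distrib_left sum_distrib_right mult_ac)
    also have "\<dots> = (\<Sum>k<n. \<Sum>i<n. \<Sum>l<n. c k * c l * (U i k * U i l))"
      by (rule sum.swap)
    also have "\<dots> = (\<Sum>k<n. \<Sum>l<n. \<Sum>i<n. c k * c l * (U i k * U i l))"
      by (intro sum.cong refl sum.swap)
    also have "\<dots> = (\<Sum>k<n. \<Sum>l<n. c k * c l * (\<Sum>i<n. U i k * U i l))"
      by (simp add: sum_distrib_left)
    also have "\<dots> = (\<Sum>k<n. \<Sum>l<n. c k * c l * (if k = l then 1 else 0))"
      using assms unfolding orthm_def by (intro sum.cong refl) auto
    also have "\<dots> = (\<Sum>k<n. (c k)^2)"
      by (simp add: power2_eq_square if_distrib cong: if_cong)
    finally show ?thesis .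
  qed
  have "0 \<le> (\<Sum>i<n. (a i - (\<Sum>k<n. c k * U i k))^2)" by (simp add: sum_nonneg)
  also have "\<dots> = (\<Sum>i<n. (a i)^2) - 2 * (\<Sum>i<n. a i * (\<Sum>k<n. c k * U i k)) + (\<Sum>i<n. (\<Sum>k<n. c k * U i k)^2)"
    by (simp add: power2_diff sum.distrib sum_subtractf sum_distrib_left mult_ac)
  also have "\<dots> = (\<Sum>i<n. (a i)^2) - (\<Sum>k<n. (c k)^2)" using cross sq by simp
  finally show ?thesis by (simp add: c_def)
qed

lemma svd_expand:
  assumes "svd n M U V \<sigma>"
  shows "(\<Sum>i<n. \<Sum>j<n. a i * M i j * b j) = (\<Sum>k<n. \<sigma> k * (\<Sum>i<n. a i * U i k) * (\<Sum>j<n. b j * V j k))"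
proof -
  have "(\<Sum>i<n. \<Sum>j<n. a i * M i j * b j) = (\<Sum>i<n. \<Sum>j<n. a i * (\<Sum>k<n. U i k * \<sigma> k * V j k) * b j)"
    using assms unfolding svd_def by (intro sum.cong refl) auto
  also have "\<dots> = (\<Sum>i<n. \<Sum>j<n. \<Sum>k<n. \<sigma> k * (a i * U i k) * (b j * V j k))"
    by (simp add: sum_distrib_left sum_distrib_right mult_ac)
  also have "\<dots> = (\<Sum>i<n. \<Sum>k<n. \<Sum>j<n. \<sigma> k * (a i * U i k) * (b j * V j k))"
    by (intro sum.cong refl sum.swap)
  also have "\<dots> = (\<Sum>k<n. \<Sum>i<n. \<Sum>j<n. \<sigma> k * (a i * U i k) * (b j * V j k))"
    by (rule sum.swap)
  also have "\<dots> = (\<Sum>k<n. \<sigma> k * (\<Sum>i<n. a i * U i k) * (\<Sum>j<n. b j * V j k))"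
    by (simp add: sum_distrib_left sum_distrib_right mult_ac)
  finally show ?thesis .
qed

lemma cs_sqrt:
  fixes a b :: "nat \<Rightarrow> real"
  shows "(\<Sum>i\<in>I. a i * b i) \<le> sqrt (\<Sum>i\<in>I. (a i)^2) * sqrt (\<Sum>i\<in>I. (b i)^2)"
proof -
  have "(\<Sum>i\<in>I. a i * b i) \<le> \<bar>\<Sum>i\<in>I. a i * b i\<bar>" by simp
  also have "\<dots> = sqrt ((\<Sum>i\<in>I. a i * b i)^2)" by simp
  also have "\<dots> \<le> sqrt ((\<Sum>i\<in>I. (a i)^2) * (\<Sum>i\<in>I. (b i)^2))"
    using Cauchy_Schwarz_ineq_sum real_sqrt_le_mono by blast
  also have "\<dots> = sqrt (\<Sum>i\<in>I. (a i)^2) * sqrt (\<Sum>i\<in>I. (b i)^2)" by (simp add: real_sqrt_mult)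
  finally show ?thesis .
qed

lemma cs_abs:
  fixes a b :: "nat \<Rightarrow> real"
  shows "\<bar>\<Sum>i\<in>I. a i * b i\<bar> \<le> sqrt (\<Sum>i\<in>I. (a i)^2) * sqrt (\<Sum>i\<in>I. (b i)^2)"
proof -
  have "\<bar>\<Sum>i\<in>I. a i * b i\<bar> = sqrt ((\<Sum>i\<in>I. a i * b i)^2)" by simp
  also have "\<dots> \<le> sqrt ((\<Sum>i\<in>I. (a i)^2) * (\<Sum>i\<in>I. (b i)^2))"
    using Cauchy_Schwarz_ineq_sum real_sqrt_le_mono by blast
  also have "\<dots> = sqrt (\<Sum>i\<in>I. (a i)^2) * sqrt (\<Sum>i\<in>I. (b i)^2)" by (simp add: real_sqrt_mult)
  finally show ?thesis .
qed

lemma orthm_col_norm: "orthm n U \<Longrightarrow> k < n \<Longrightarrow> (\<Sum>i<n. (U i k)^2) = 1"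
  unfolding orthm_def by (simp add: power2_eq_square)

lemma svd_dual_bound:
  assumes svd: "svd n M U V \<sigma>" and U': "orthm n U'" and V': "orthm n V'"
  shows "(\<Sum>k<n. \<Sum>i<n. \<Sum>j<n. U' i k * M i j * V' j k) \<le> (\<Sum>m<n. \<sigma> m)"
proof -
  have "(\<Sum>k<n. \<Sum>i<n. \<Sum>j<n. U' i k * M i j * V' j k) =
        (\<Sum>k<n. \<Sum>m<n. \<sigma> m * (\<Sum>i<n. U' i k * U i m) * (\<Sum>j<n. V' j k * V j m))"
    using svd_expand[OF svd] by simp
  also have "\<dots> = (\<Sum>m<n. \<Sum>k<n. \<sigma> m * (\<Sum>i<n. U' i k * U i m) * (\<Sum>j<n. V' j k * V j m))"
    by (rule sum.swap)
  also have "\<dots> = (\<Sum>m<n. \<sigma> m * (\<Sum>k<n. (\<Sum>i<n. U' i k * U i m) * (\<Sum>j<n. V' j k * V j m)))"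
    by (simp only: sum_cmul3)
  also have "\<dots> \<le> (\<Sum>m<n. \<sigma> m * 1)"
  proof (rule sum_mono)
    fix m assume m: "m \<in> {..<n}"
    have s0: "0 \<le> \<sigma> m" using svd m unfolding svd_def by auto
    have "(\<Sum>k<n. (\<Sum>i<n. U' i k * U i m) * (\<Sum>j<n. V' j k * V j m))
       \<le> sqrt (\<Sum>k<n. (\<Sum>i<n. U' i k * U i m)^2) * sqrt (\<Sum>k<n. (\<Sum>j<n. V' j k * V j m)^2)"
      by (rule cs_sqrt)
    also have "\<dots> \<le> 1 * 1"
    proof (rule mult_mono)
      have "(\<Sum>k<n. (\<Sum>i<n. U' i k * U i m)^2) \<le> (\<Sum>i<n. (U i m)^2)" by (rule bessel[OF U'])
      also have "\<dots> = 1" using svd m orthm_col_norm unfolding svd_def by auto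
      finally show "sqrt (\<Sum>k<n. (\<Sum>i<n. U' i k * U i m)^2) \<le> 1" by simp
      have "(\<Sum>k<n. (\<Sum>j<n. V' j k * V j m)^2) \<le> (\<Sum>j<n. (V j m)^2)" by (rule bessel[OF V'])
      also have "\<dots> = 1" using svd m orthm_col_norm unfolding svd_def by auto
      finally show "sqrt (\<Sum>k<n. (\<Sum>j<n. V' j k * V j m)^2) \<le> 1" by simp
    qed (auto intro: sum_nonneg)
    finally show "\<sigma> m * (\<Sum>k<n. (\<Sum>i<n. U' i k * U i m) * (\<Sum>j<n. V' j k * V j m)) \<le> \<sigma> m * 1"
      using s0 mult_left_mono by fastforce
  qed
  finally show ?thesis by simp
qed

lemma svd_self:
  assumes svd: "svd n M U V \<sigma>"
  shows "(\<Sum>k<n. \<Sum>i<n. \<Sum>j<n. U i k * M i j * V j k) = (\<Sum>m<n. \<sigma> m)"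
proof -
  have "(\<Sum>k<n. \<Sum>i<n. \<Sum>j<n. U i k * M i j * V j k) =
        (\<Sum>k<n. \<Sum>m<n. \<sigma> m * (\<Sum>i<n. U i k * U i m) * (\<Sum>j<n. V j k * V j m))"
    using svd_expand[OF svd] by simp
  also have "\<dots> = (\<Sum>k<n. \<Sum>m<n. \<sigma> m * (if k = m then 1 else 0) * (if k = m then 1 else 0))"
    using svd unfolding svd_def orthm_def by (intro sum.cong refl) auto
  also have "\<dots> = (\<Sum>m<n. \<sigma> m)" by (simp add: if_distrib cong: if_cong)
  finally show ?thesis .
qed

lemma svd_sum_unique:
  assumes "svd n M U V \<sigma>" "svd n M U' V' \<sigma>'"
  shows "(\<Sum>k<n. \<sigma> k) = (\<Sum>k<n. \<sigma>' k)"
proof -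
  have a: "(\<Sum>k<n. \<sigma>' k) \<le> (\<Sum>k<n. \<sigma> k)"
    using svd_dual_bound[OF assms(1), of U' V'] svd_self[OF assms(2)] assms(2) unfolding svd_def by simp
  have b: "(\<Sum>k<n. \<sigma> k) \<le> (\<Sum>k<n. \<sigma>' k)"
    using svd_dual_bound[OF assms(2), of U V] svd_self[OF assms(1)] assms(1) unfolding svd_def by simp
  from a b show ?thesis by simp
qed

lemma trace_norm_svd:
  assumes "svd n M U V \<sigma>"
  shows "trace_norm n M = (\<Sum>k<n. \<sigma> k)"
  unfolding trace_norm_def
proof (rule the_equality)
  show "\<exists>U V \<sigma>'. (\<forall>i<n. \<forall>j<n. (\<Sum>k<n. U k i * U k j) = (if i = j then 1 else 0)) \<and>
      (\<forall>i<n. \<forall>j<n. (\<Sum>k<n. V k i * V k j) = (if i = j then 1 else 0)) \<and> (\<forall>k<n. 0 \<le> \<sigma>' k) \<and>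
      (\<forall>i<n. \<forall>j<n. M i j = (\<Sum>k<n. U i k * \<sigma>' k * V j k)) \<and> (\<Sum>k<n. \<sigma> k) = (\<Sum>k<n. \<sigma>' k)"
    using assms unfolding svd_def orthm_def by blast
  fix s assume "\<exists>U V \<sigma>'. (\<forall>i<n. \<forall>j<n. (\<Sum>k<n. U k i * U k j) = (if i = j then 1 else 0)) \<and>
      (\<forall>i<n. \<forall>j<n. (\<Sum>k<n. V k i * V k j) = (if i = j then 1 else 0)) \<and> (\<forall>k<n. 0 \<le> \<sigma>' k) \<and>
      (\<forall>i<n. \<forall>j<n. M i j = (\<Sum>k<n. U i k * \<sigma>' k * V j k)) \<and> s = (\<Sum>k<n. \<sigma>' k)"
  then obtain U' V' \<sigma>' where "svd n M U' V' \<sigma>'" "s = (\<Sum>k<n. \<sigma>' k)"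
    unfolding svd_def orthm_def by blast
  then show "s = (\<Sum>k<n. \<sigma> k)" using svd_sum_unique[OF assms] by simp
qed

definition unitv :: "nat \<Rightarrow> (nat \<Rightarrow> real) \<Rightarrow> bool" where
  "unitv p x \<longleftrightarrow> (\<forall>i. p \<le> i \<longrightarrow> x i = 0) \<and> (\<Sum>i<p. (x i)^2) = 1"

lemma compact_box: "compact {x::nat\<Rightarrow>real. \<forall>i. x i \<in> {-1..1}}"
proof -
  have "compactin (product_topology (\<lambda>_. euclidean) UNIV) (PiE UNIV (\<lambda>_::nat. {-1..1::real}))"
    by (subst compactin_PiE) auto
  moreover have "PiE UNIV (\<lambda>_::nat. {-1..1::real}) = {x. \<forall>i. x i \<in> {-1..1}}"
    by (auto simp: PiE_def extensional_def)
  ultimately show ?thesis by (simp add: euclidean_product_topology)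
qed

lemma compact_sph: "compact {x. unitv p x}"
proof -
  have cl: "closed {x::nat\<Rightarrow>real. unitv p x}"
    unfolding unitv_def
    by (intro closed_Collect_conj closed_Collect_all closed_Collect_imp closed_Collect_eq continuous_intros)
       auto
  have sub: "{x. unitv p x} \<subseteq> {x::nat\<Rightarrow>real. \<forall>i. x i \<in> {-1..1}}"
  proof (clarify)
    fix x :: "nat \<Rightarrow> real" and i assume u: "unitv p x"
    show "x i \<in> {-1..1}"
    proof (cases "i < p")
      case True
      have "(x i)^2 \<le> (\<Sum>j<p. (x j)^2)"
        using True by (intro member_le_sum) auto
      then have "(x i)^2 \<le> 1" using u unfolding unitv_def by simp
      then show ?thesis using abs_square_le_1[of "x i"] by auto
    next
      case False then show ?thesis using u unfolding unitv_def by auto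
    qed
  qed
  have "{x. unitv p x} = {x::nat\<Rightarrow>real. \<forall>i. x i \<in> {-1..1}} \<inter> {x. unitv p x}" using sub by blast
  then show ?thesis using compact_Int_closed[OF compact_box cl] by simp
qed

lemma bil_max:
  assumes "0 < p"
  shows "\<exists>u v. unitv p u \<and> unitv p v \<and> (\<forall>u' v'. unitv p u' \<longrightarrow> unitv p v' \<longrightarrow>
     (\<Sum>i<p. \<Sum>j<p. u' i * N i j * v' j) \<le> (\<Sum>i<p. \<Sum>j<p. u i * N i j * v j))"
proof -
  let ?S = "{x. unitv p x} \<times> {x. unitv p x}"
  let ?f = "\<lambda>q::(nat\<Rightarrow>real)\<times>(nat\<Rightarrow>real). (\<Sum>i<p. \<Sum>j<p. fst q i * N i j * snd q j)"
  have c: "compact ?S" by (intro compact_Times compact_sph)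
  have "(\<Sum>i<p. (if i = 0 then 1 else 0::real)^2) = (\<Sum>i<p. if i = 0 then 1 else 0)"
    by (rule sum.cong) auto
  also have "\<dots> = 1" using assms by simp
  finally have e0: "unitv p (\<lambda>i. if i = 0 then 1 else 0)"
    using assms unfolding unitv_def by auto
  then have ne: "?S \<noteq> {}" by blast
  have ct: "continuous_on ?S ?f"
    by (intro continuous_intros continuous_on_compose2[OF continuous_on_product_coordinates]) auto
  from continuous_attains_sup[OF c ne ct] obtain q where "q \<in> ?S" "\<forall>y\<in>?S. ?f y \<le> ?f q" by blast
  then show ?thesis by (intro exI[of _ "fst q"] exI[of _ "snd q"]) auto
qed

lemma align:
  assumes u: "unitv p u" and mx: "\<forall>u'. unitv p u' \<longrightarrow> (\<Sum>i<p. u' i * a i) \<le> (\<Sum>i<p. u i * a i)"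
  shows "0 \<le> (\<Sum>i<p. u i * a i) \<and> (\<forall>i<p. a i = (\<Sum>i<p. u i * a i) * u i)"
proof -
  define \<sigma> where "\<sigma> = (\<Sum>i<p. u i * a i)"
  define s2 where "s2 = (\<Sum>i<p. (a i)^2)"
  have u1: "(\<Sum>i<p. (u i)^2) = 1" using u unfolding unitv_def by simp
  show ?thesis
  proof (cases "s2 = 0")
    case True
    then have a0: "\<forall>i<p. a i = 0" unfolding s2_def
      using sum_nonneg_eq_0_iff[of "{..<p}" "\<lambda>i. (a i)^2"] by auto
    then have "\<sigma> = 0" unfolding \<sigma>_def by simp
    then show ?thesis using a0 unfolding \<sigma>_def by simp
  next
    case False
    have s2pos: "0 < s2" using False unfolding s2_def by (simp add: sum_nonneg order_le_neq_trans)
    define r where "r = sqrt s2"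
    have rpos: "0 < r" using s2pos unfolding r_def by simp
    have r2: "r^2 = s2" using s2pos unfolding r_def by simp
    define u' where "u' i = (if i < p then a i / r else 0)" for i
    have "(\<Sum>i<p. (u' i)^2) = (\<Sum>i<p. (a i)^2 / r^2)"
      unfolding u'_def by (rule sum.cong) (auto simp: power_divide)
    also have "\<dots> = s2 / r^2" unfolding s2_def by (simp add: sum_divide_distrib)
    also have "\<dots> = 1" using r2 s2pos by simp
    finally have "unitv p u'" unfolding unitv_def u'_def by auto
    then have "(\<Sum>i<p. u' i * a i) \<le> \<sigma>" using mx unfolding \<sigma>_def by blast
    moreover have "(\<Sum>i<p. u' i * a i) = s2 / r"
      unfolding u'_def s2_def by (simp add: sum_divide_distrib power2_eq_square)
    moreover have "s2 / r = r" using r2 rpos by (auto simp: power2_eq_square field_simps)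
    ultimately have ge: "r \<le> \<sigma>" by simp
    have "\<sigma> \<le> sqrt (\<Sum>i<p. (u i)^2) * sqrt s2" unfolding \<sigma>_def s2_def by (rule cs_sqrt)
    then have le: "\<sigma> \<le> r" using u1 unfolding r_def by simp
    have sr: "\<sigma> = r" using ge le by simp
    have "(\<Sum>i<p. (u i - a i / r)^2) = (\<Sum>i<p. (u i)^2) - 2 * (\<Sum>i<p. u i * a i) / r + (\<Sum>i<p. (a i)^2) / r^2"
      by (simp add: power2_diff sum.distrib sum_subtractf sum_divide_distrib sum_distrib_left power_divide mult_ac)
    also have "\<dots> = 0" using u1 sr rpos r2 s2pos unfolding \<sigma>_def s2_def by (simp add: power2_eq_square)
    finally have z: "(\<Sum>i<p. (u i - a i / r)^2) = 0" .
    have "\<forall>i<p. (u i - a i / r)^2 = 0"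
      using sum_nonneg_eq_0_iff[of "{..<p}" "\<lambda>i. (u i - a i / r)^2"] z by auto
    then have "\<forall>i<p. a i = r * u i" using rpos by (auto simp: field_simps)
    then show ?thesis using sr rpos unfolding \<sigma>_def by auto
  qed
qed

lemma householder:
  assumes u: "unitv p u" and q: "q < p"
  shows "\<exists>H. (\<forall>i<p. \<forall>j<p. H i j = H j i) \<and>
             (\<forall>i<p. \<forall>j<p. (\<Sum>k<p. H i k * H k j) = (if i = j then 1 else 0)) \<and>
             (\<forall>i<p. H i q = u i)"
proof -
  have u1: "(\<Sum>i<p. (u i)^2) = 1" using u unfolding unitv_def by simp
  define w where "w i = u i - (if i = q then 1 else 0)" for i
  define ww where "ww = (\<Sum>i<p. (w i)^2)"
  have wwe: "ww = 2 - 2 * u q"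
  proof -
    have "ww = (\<Sum>i<p. (u i)^2 - 2 * (if i = q then u i else 0) + (if i = q then 1 else 0))"
      unfolding ww_def w_def by (rule sum.cong) (auto simp: power2_diff)
    also have "\<dots> = 1 - 2 * u q + 1" using q u1 by (simp add: sum.distrib sum_subtractf sum_distrib_left[symmetric])
    finally show ?thesis by simp
  qed
  show ?thesis
  proof (cases "ww = 0")
    case True
    then have w0: "\<forall>i<p. w i = 0" unfolding ww_def
      using sum_nonneg_eq_0_iff[of "{..<p}" "\<lambda>i. (w i)^2"] by auto
    show ?thesis
    proof (intro exI[of _ "\<lambda>i j. if i = j then 1 else 0"] conjI allI impI)
      fix i j assume "i < p" "j < p"
      show "(\<Sum>k<p. (if i = k then 1 else 0) * (if k = j then 1 else (0::real))) = (if i = j then 1 else 0)"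
      proof -
        have "(\<Sum>k<p. (if i = k then 1 else 0) * (if k = j then 1 else (0::real))) =
              (\<Sum>k<p. if k = i then (if i = j then 1 else 0) else 0)" by (rule sum.cong) auto
        then show ?thesis using \<open>i < p\<close> by simp
      qed
    next
      fix i assume "i < p" then show "(if i = q then 1 else 0) = u i" using w0 unfolding w_def by auto
    qed auto
  next
    case False
    have wwpos: "0 < ww" using False unfolding ww_def by (simp add: sum_nonneg order_le_neq_trans)
    define H where "H i j = (if i = j then 1 else 0) - 2 * w i * w j / ww" for i j
    show ?thesis
    proof (intro exI[of _ H] conjI allI impI)
      fix i j assume ij: "i < p" "j < p"
      show "H i j = H j i" unfolding H_def by auto
      have "(\<Sum>k<p. H i k * H k j) = (\<Sum>k<p. (if i = k then 1 else 0) * (if k = j then 1 else 0)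
            - 2 * (if i = k then 1 else 0) * w k * w j / ww - 2 * (if k = j then 1 else 0) * w i * w k / ww
            + 4 * w i * w j * (w k)^2 / ww^2)"
        unfolding H_def using wwpos by (intro sum.cong) (auto simp: field_simps power2_eq_square)
      also have "\<dots> = (\<Sum>k<p. (if i = k then 1 else 0) * (if k = j then 1 else 0))
            - (\<Sum>k<p. 2 * (if i = k then 1 else 0) * w k * w j / ww) - (\<Sum>k<p. 2 * (if k = j then 1 else 0) * w i * w k / ww)
            + (\<Sum>k<p. 4 * w i * w j * (w k)^2 / ww^2)"
        by (simp add: sum.distrib sum_subtractf)
      finally have eq0: "(\<Sum>k<p. H i k * H k j) = (\<Sum>k<p. (if i = k then 1 else 0) * (if k = j then 1 else 0))
            - (\<Sum>k<p. 2 * (if i = k then 1 else 0) * w k * w j / ww) - (\<Sum>k<p. 2 * (if k = j then 1 else 0) * w i * w k / ww)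
            + (\<Sum>k<p. 4 * w i * w j * (w k)^2 / ww^2)" .
      moreover have "(\<Sum>k<p. (if i = k then 1 else 0) * (if k = j then 1 else 0)) = (if i = j then 1 else (0::real))"
      proof -
        have "(\<Sum>k<p. (if i = k then 1 else 0) * (if k = j then 1 else (0::real))) =
              (\<Sum>k<p. if k = i then (if i = j then 1 else 0) else 0)" by (rule sum.cong) auto
        then show ?thesis using ij by simp
      qed
      moreover have "(\<Sum>k<p. 2 * (if i = k then 1 else 0) * w k * w j / ww) = 2 * w i * w j / ww"
      proof -
        have "(\<Sum>k<p. 2 * (if i = k then 1 else 0) * w k * w j / ww) = (\<Sum>k<p. if k = i then 2 * w i * w j / ww else 0)"
          by (rule sum.cong) auto
        then show ?thesis using ij by simp
      qed
      moreover have "(\<Sum>k<p. 2 * (if k = j then 1 else 0) * w i * w k / ww) = 2 * w i * w j / ww"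
      proof -
        have "(\<Sum>k<p. 2 * (if k = j then 1 else 0) * w i * w k / ww) = (\<Sum>k<p. if k = j then 2 * w i * w j / ww else 0)"
          by (rule sum.cong) auto
        then show ?thesis using ij by simp
      qed
      moreover have "(\<Sum>k<p. 4 * w i * w j * (w k)^2 / ww^2) = 4 * w i * w j * ww / ww^2"
        unfolding ww_def by (simp add: sum_distrib_left sum_divide_distrib)
      ultimately show "(\<Sum>k<p. H i k * H k j) = (if i = j then 1 else 0)" using wwpos by (simp add: power2_eq_square)

    next
      fix i assume "i < p"
      have wq: "w q = u q - 1" unfolding w_def by simp
      have "H i q = (if i = q then 1 else 0) + w i * (- 2 * w q / ww)" unfolding H_def by simp
      also have "- 2 * w q / ww = 1" using wq wwe wwpos by (simp add: field_simps)
      finally show "H i q = u i" unfolding w_def by auto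
    qed
  qed
qed

lemma reorder4:
  fixes f :: "nat \<Rightarrow> nat \<Rightarrow> nat \<Rightarrow> nat \<Rightarrow> real"
  shows "(\<Sum>r\<in>I. \<Sum>s\<in>I. \<Sum>p\<in>I. \<Sum>q\<in>I. f r s p q) = (\<Sum>p\<in>I. \<Sum>q\<in>I. \<Sum>r\<in>I. \<Sum>s\<in>I. f r s p q)"
proof -
  have "(\<Sum>r\<in>I. \<Sum>s\<in>I. \<Sum>p\<in>I. \<Sum>q\<in>I. f r s p q) = (\<Sum>r\<in>I. \<Sum>p\<in>I. \<Sum>s\<in>I. \<Sum>q\<in>I. f r s p q)"
    by (rule sum.cong[OF refl], rule sum.swap)
  also have "\<dots> = (\<Sum>p\<in>I. \<Sum>r\<in>I. \<Sum>s\<in>I. \<Sum>q\<in>I. f r s p q)" by (rule sum.swap)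
  also have "\<dots> = (\<Sum>p\<in>I. \<Sum>r\<in>I. \<Sum>q\<in>I. \<Sum>s\<in>I. f r s p q)"
    by (rule sum.cong[OF refl], rule sum.cong[OF refl], rule sum.swap)
  also have "\<dots> = (\<Sum>p\<in>I. \<Sum>q\<in>I. \<Sum>r\<in>I. \<Sum>s\<in>I. f r s p q)"
    by (rule sum.cong[OF refl], rule sum.swap)
  finally show ?thesis .
qed

lemma triple:
  fixes a e :: "nat \<Rightarrow> real" and b c d :: "nat \<Rightarrow> nat \<Rightarrow> real"
  shows "(\<Sum>r\<in>I. \<Sum>s\<in>I. a r * (\<Sum>p\<in>I. \<Sum>q\<in>I. b r p * c p q * d q s) * e s) =
         (\<Sum>p\<in>I. \<Sum>q\<in>I. (\<Sum>r\<in>I. a r * b r p) * c p q * (\<Sum>s\<in>I. d q s * e s))"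
proof -
  have L: "(\<Sum>r\<in>I. \<Sum>s\<in>I. a r * (\<Sum>p\<in>I. \<Sum>q\<in>I. b r p * c p q * d q s) * e s) =
        (\<Sum>r\<in>I. \<Sum>s\<in>I. \<Sum>p\<in>I. \<Sum>q\<in>I. a r * b r p * c p q * d q s * e s)"
    by (simp add: sum_distrib_left sum_distrib_right mult_ac)
  have R: "(\<Sum>p\<in>I. \<Sum>q\<in>I. (\<Sum>r\<in>I. a r * b r p) * c p q * (\<Sum>s\<in>I. d q s * e s)) =
        (\<Sum>p\<in>I. \<Sum>q\<in>I. \<Sum>r\<in>I. \<Sum>s\<in>I. a r * b r p * c p q * d q s * e s)"
    by (simp add: sum_distrib_left sum_distrib_right mult_ac)
  show ?thesis unfolding L R by (rule reorder4)
qed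

lemma gram:
  fixes a :: "nat \<Rightarrow> nat \<Rightarrow> real" and x y :: "nat \<Rightarrow> real"
  shows "(\<Sum>i\<in>I. (\<Sum>r\<in>I. a i r * x r) * (\<Sum>s\<in>I. a i s * y s)) =
         (\<Sum>r\<in>I. \<Sum>s\<in>I. x r * y s * (\<Sum>i\<in>I. a i r * a i s))"
proof -
  have "(\<Sum>i\<in>I. (\<Sum>r\<in>I. a i r * x r) * (\<Sum>s\<in>I. a i s * y s)) = (\<Sum>i\<in>I. \<Sum>r\<in>I. \<Sum>s\<in>I. x r * y s * (a i r * a i s))"
    by (simp only: sum_product) (simp add: mult_ac)
  also have "\<dots> = (\<Sum>r\<in>I. \<Sum>i\<in>I. \<Sum>s\<in>I. x r * y s * (a i r * a i s))" by (rule sum.swap)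
  also have "\<dots> = (\<Sum>r\<in>I. \<Sum>s\<in>I. \<Sum>i\<in>I. x r * y s * (a i r * a i s))"
    by (rule sum.cong[OF refl], rule sum.swap)
  also have "\<dots> = (\<Sum>r\<in>I. \<Sum>s\<in>I. x r * y s * (\<Sum>i\<in>I. a i r * a i s))"
    by (simp add: sum_distrib_left)
  finally show ?thesis .
qed

lemma g2:
  fixes a e c :: "nat \<Rightarrow> real" and x y :: "nat \<Rightarrow> nat \<Rightarrow> real"
  shows "(\<Sum>k\<in>I. (\<Sum>r\<in>I. a r * x r k) * c k * (\<Sum>s\<in>I. e s * y s k)) =
         (\<Sum>r\<in>I. \<Sum>s\<in>I. a r * (\<Sum>k\<in>I. x r k * c k * y s k) * e s)"
proof -
  have "(\<Sum>k\<in>I. (\<Sum>r\<in>I. a r * x r k) * c k * (\<Sum>s\<in>I. e s * y s k)) =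
        (\<Sum>k\<in>I. \<Sum>r\<in>I. \<Sum>s\<in>I. a r * e s * (x r k * c k * y s k))"
    by (simp add: sum_distrib_left sum_distrib_right mult_ac)
  also have "\<dots> = (\<Sum>r\<in>I. \<Sum>k\<in>I. \<Sum>s\<in>I. a r * e s * (x r k * c k * y s k))" by (rule sum.swap)
  also have "\<dots> = (\<Sum>r\<in>I. \<Sum>s\<in>I. \<Sum>k\<in>I. a r * e s * (x r k * c k * y s k))"
    by (rule sum.cong[OF refl], rule sum.swap)
  also have "\<dots> = (\<Sum>r\<in>I. \<Sum>s\<in>I. a r * (\<Sum>k\<in>I. x r k * c k * y s k) * e s)"
    by (simp add: sum_distrib_left mult_ac)
  finally show ?thesis .
qed

lemma delta_l: fixes f :: "nat \<Rightarrow> real" shows "i < n \<Longrightarrow> (\<Sum>k<n. (if i = k then 1 else 0) * (f k::real)) = f i"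
proof -
  assume "i < n"
  have "(\<Sum>k<n. (if i = k then 1 else 0) * f k) = (\<Sum>k<n. if k = i then f k else 0)" by (rule sum.cong) auto
  also have "\<dots> = f i" using \<open>i < n\<close> by (subst sum.delta) auto
  finally show ?thesis .
qed

lemma delta_r: fixes f :: "nat \<Rightarrow> real" shows "j < n \<Longrightarrow> (\<Sum>k<n. (f k::real) * (if k = j then 1 else 0)) = f j"
proof -
  assume "j < n"
  have "(\<Sum>k<n. f k * (if k = j then 1 else 0)) = (\<Sum>k<n. if k = j then f k else 0)" by (rule sum.cong) auto
  also have "\<dots> = f j" using \<open>j < n\<close> by (subst sum.delta) auto
  finally show ?thesis .
qed

lemma delta_r': fixes f :: "nat \<Rightarrow> real" shows "j < n \<Longrightarrow> (\<Sum>k<n. (f k::real) * (if j = k then 1 else 0)) = f j"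
  using delta_r[of j n f] by (simp add: eq_commute)

lemma orthm_mult:
  assumes "orthm n H" "orthm n Q"
  shows "orthm n (\<lambda>i k. \<Sum>r<n. H i r * Q r k)"
  unfolding orthm_def
proof (intro allI impI)
  fix k l assume kl: "k < n" "l < n"
  have "(\<Sum>i<n. (\<Sum>r<n. H i r * Q r k) * (\<Sum>s<n. H i s * Q s l)) =
        (\<Sum>r<n. \<Sum>s<n. Q r k * Q s l * (\<Sum>i<n. H i r * H i s))" by (rule gram)
  also have "\<dots> = (\<Sum>r<n. \<Sum>s<n. Q r k * Q s l * (if r = s then 1 else 0))"
    using assms(1) unfolding orthm_def by (intro sum.cong refl) auto
  also have "\<dots> = (\<Sum>r<n. Q r k * Q r l)"
    by (rule sum.cong[OF refl]) (rule delta_r', simp)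
  also have "\<dots> = (if k = l then 1 else 0)" using assms(2) kl unfolding orthm_def by auto
  finally show "(\<Sum>i<n. (\<Sum>r<n. H i r * Q r k) * (\<Sum>s<n. H i s * Q s l)) = (if k = l then 1 else 0)" .
qed

declare sum.lessThan_Suc[simp del]

lemma orthm_ext:
  assumes "orthm m U'"
  shows "orthm (Suc m) (\<lambda>p k. if k < m then (if p < m then U' p k else 0) else (if p = m then 1 else 0))"
  unfolding orthm_def
proof (intro allI impI)
  fix i j assume ij: "i < Suc m" "j < Suc m"
  let ?U = "\<lambda>p k. if k < m then (if p < m then U' p k else 0) else (if p = m then 1 else (0::real))"
  have "(\<Sum>k<Suc m. ?U k i * ?U k j) = (\<Sum>k<m. ?U k i * ?U k j) + ?U m i * ?U m j"
    by (simp add: sum.lessThan_Suc)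
  moreover have "(\<Sum>k<m. ?U k i * ?U k j) = (if i < m \<and> j < m then (\<Sum>k<m. U' k i * U' k j) else 0)"
    by (auto intro: sum.neutral)
  ultimately show "(\<Sum>k<Suc m. ?U k i * ?U k j) = (if i = j then 1 else 0)"
    using assms ij unfolding orthm_def by (auto simp: less_Suc_eq)
qed

lemma svd_exists: "\<exists>U V \<sigma>. svd n M U V \<sigma>"
proof (induction n arbitrary: M)
  case 0 show ?case unfolding svd_def orthm_def by auto
next
  case (Suc m)
  obtain u v where u: "unitv (Suc m) u" and v: "unitv (Suc m) v" and mx:
    "\<forall>u' v'. unitv (Suc m) u' \<longrightarrow> unitv (Suc m) v' \<longrightarrow>
     (\<Sum>i<Suc m. \<Sum>j<Suc m. u' i * M i j * v' j) \<le> (\<Sum>i<Suc m. \<Sum>j<Suc m. u i * M i j * v j)"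
    using bil_max[of "Suc m" M] by auto
  define \<sigma>0 where "\<sigma>0 = (\<Sum>i<Suc m. \<Sum>j<Suc m. u i * M i j * v j)"
  have e1: "(\<Sum>i<Suc m. x i * (\<Sum>j<Suc m. M i j * y j)) = (\<Sum>i<Suc m. \<Sum>j<Suc m. x i * M i j * y j)" for x y
    by (simp add: sum_distrib_left mult.assoc)
  have e2: "(\<Sum>j<Suc m. y j * (\<Sum>i<Suc m. x i * M i j)) = (\<Sum>i<Suc m. \<Sum>j<Suc m. x i * M i j * y j)" for x y
  proof -
    have "(\<Sum>j<Suc m. y j * (\<Sum>i<Suc m. x i * M i j)) = (\<Sum>j<Suc m. \<Sum>i<Suc m. x i * M i j * y j)"
      by (simp add: sum_distrib_left mult_ac)
    also have "\<dots> = (\<Sum>i<Suc m. \<Sum>j<Suc m. x i * M i j * y j)" by (rule sum.swap)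
    finally show ?thesis .
  qed
  have A1: "0 \<le> \<sigma>0 \<and> (\<forall>i<Suc m. (\<Sum>j<Suc m. M i j * v j) = \<sigma>0 * u i)"
    using align[OF u, of "\<lambda>i. \<Sum>j<Suc m. M i j * v j"] mx v unfolding e1 \<sigma>0_def by blast
  have A2: "\<forall>j<Suc m. (\<Sum>i<Suc m. u i * M i j) = \<sigma>0 * v j"
    using align[OF v, of "\<lambda>j. \<Sum>i<Suc m. u i * M i j"] mx u unfolding e2 \<sigma>0_def by blast
  obtain H1 where H1s: "\<forall>i<Suc m. \<forall>j<Suc m. H1 i j = H1 j i"
    and H1i: "\<forall>i<Suc m. \<forall>j<Suc m. (\<Sum>k<Suc m. H1 i k * H1 k j) = (if i = j then 1 else 0)"
    and H1u: "\<forall>i<Suc m. H1 i m = u i"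
    using householder[OF u, of m] by auto
  obtain H2 where H2s: "\<forall>i<Suc m. \<forall>j<Suc m. H2 i j = H2 j i"
    and H2i: "\<forall>i<Suc m. \<forall>j<Suc m. (\<Sum>k<Suc m. H2 i k * H2 k j) = (if i = j then 1 else 0)"
    and H2v: "\<forall>i<Suc m. H2 i m = v i"
    using householder[OF v, of m] by auto
  define B where "B i j = (\<Sum>p<Suc m. \<Sum>q<Suc m. H1 i p * M p q * H2 q j)" for i j
  have Bcol: "B i m = (if i = m then \<sigma>0 else 0)" if "i < Suc m" for i
  proof -
    have "B i m = (\<Sum>p<Suc m. H1 i p * (\<Sum>q<Suc m. M p q * v q))"
      unfolding B_def using H2v by (simp add: sum_distrib_left mult.assoc)
    also have "\<dots> = (\<Sum>p<Suc m. H1 i p * (\<sigma>0 * H1 p m))"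
      using A1 H1u by (intro sum.cong refl) auto
    also have "\<dots> = \<sigma>0 * (\<Sum>p<Suc m. H1 i p * H1 p m)" by (simp add: sum_distrib_left mult_ac)
    also have "\<dots> = (if i = m then \<sigma>0 else 0)" using H1i that by simp
    finally show ?thesis .
  qed
  have Brow: "B m j = (if j = m then \<sigma>0 else 0)" if "j < Suc m" for j
  proof -
    have "B m j = (\<Sum>q<Suc m. (\<Sum>p<Suc m. H1 m p * M p q) * H2 q j)"
      unfolding B_def by (subst sum.swap) (simp add: sum_distrib_right)
    also have "\<dots> = (\<Sum>q<Suc m. (\<Sum>p<Suc m. u p * M p q) * H2 q j)"
      using H1u H1s by (intro sum.cong refl) auto
    also have "\<dots> = (\<Sum>q<Suc m. (\<sigma>0 * H2 m q) * H2 q j)"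
      using A2 H2v H2s by (intro sum.cong refl) auto
    also have "\<dots> = \<sigma>0 * (\<Sum>q<Suc m. H2 m q * H2 q j)" by (simp add: sum_distrib_left mult_ac)
    also have "\<dots> = (if j = m then \<sigma>0 else 0)" using H2i that by auto
    finally show ?thesis .
  qed
  obtain U' V' \<sigma>' where IH: "svd m B U' V' \<sigma>'" using Suc.IH by blast
  define Ub where "Ub p k = (if k < m then (if p < m then U' p k else 0) else (if p = m then 1 else 0))" for p k
  define Vb where "Vb p k = (if k < m then (if p < m then V' p k else 0) else (if p = m then 1 else 0))" for p k
  define \<sigma>b where "\<sigma>b k = (if k < m then \<sigma>' k else \<sigma>0)" for k
  have oU: "orthm (Suc m) Ub" unfolding Ub_def using IH unfolding svd_def by (intro orthm_ext) auto
  have oV: "orthm (Suc m) Vb" unfolding Vb_def using IH unfolding svd_def by (intro orthm_ext) auto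
  have blk: "(\<Sum>k<Suc m. Ub p k * \<sigma>b k * Vb q k) = B p q" if "p < Suc m" "q < Suc m" for p q
  proof -
    have "(\<Sum>k<Suc m. Ub p k * \<sigma>b k * Vb q k) = (\<Sum>k<m. Ub p k * \<sigma>b k * Vb q k) + Ub p m * \<sigma>b m * Vb q m"
      by (simp add: sum.lessThan_Suc)
    also have "(\<Sum>k<m. Ub p k * \<sigma>b k * Vb q k) = (if p < m \<and> q < m then (\<Sum>k<m. U' p k * \<sigma>' k * V' q k) else 0)"
      unfolding Ub_def Vb_def \<sigma>b_def by (auto intro: sum.neutral)
    finally have "(\<Sum>k<Suc m. Ub p k * \<sigma>b k * Vb q k) = (if p < m \<and> q < m then (\<Sum>k<m. U' p k * \<sigma>' k * V' q k) else 0)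
        + Ub p m * \<sigma>b m * Vb q m" .
    moreover have "p < m \<and> q < m \<Longrightarrow> (\<Sum>k<m. U' p k * \<sigma>' k * V' q k) = B p q" using IH unfolding svd_def by auto
    moreover have "p = m \<or> q = m \<Longrightarrow> B p q = (if p = m \<and> q = m then \<sigma>0 else 0)"
      using Bcol[of p] Brow[of q] that by auto
    ultimately show ?thesis using that unfolding Ub_def Vb_def \<sigma>b_def by auto
  qed
  have oH1: "orthm (Suc m) H1" unfolding orthm_def using H1s H1i by simp
  have oH2: "orthm (Suc m) H2" unfolding orthm_def using H2s H2i by simp
  define U where "U i k = (\<Sum>r<Suc m. H1 i r * Ub r k)" for i k
  define V where "V i k = (\<Sum>r<Suc m. H2 i r * Vb r k)" for i k
  have "svd (Suc m) M U V \<sigma>b"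
    unfolding svd_def
  proof (intro conjI allI impI)
    show "orthm (Suc m) U" unfolding U_def by (rule orthm_mult[OF oH1 oU])
    show "orthm (Suc m) V" unfolding V_def by (rule orthm_mult[OF oH2 oV])
    show "0 \<le> \<sigma>b k" if "k < Suc m" for k using IH A1 that unfolding svd_def \<sigma>b_def by auto
    fix i j assume ij: "i < Suc m" "j < Suc m"
    have "(\<Sum>k<Suc m. U i k * \<sigma>b k * V j k) =
          (\<Sum>r<Suc m. \<Sum>s<Suc m. H1 i r * (\<Sum>k<Suc m. Ub r k * \<sigma>b k * Vb s k) * H2 j s)"
      unfolding U_def V_def by (rule g2)
    also have "\<dots> = (\<Sum>r<Suc m. \<Sum>s<Suc m. H1 i r * B r s * H2 s j)"
      using blk H2s ij by (intro sum.cong refl) auto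
    also have "\<dots> = (\<Sum>r<Suc m. \<Sum>s<Suc m. H1 i r * (\<Sum>p<Suc m. \<Sum>q<Suc m. H1 r p * M p q * H2 q s) * H2 s j)"
      unfolding B_def ..
    also have "\<dots> = (\<Sum>p<Suc m. \<Sum>q<Suc m. (\<Sum>r<Suc m. H1 i r * H1 r p) * M p q * (\<Sum>s<Suc m. H2 q s * H2 s j))"
      by (rule triple)
    also have "\<dots> = (\<Sum>p<Suc m. \<Sum>q<Suc m. (if i = p then 1 else 0) * M p q * (if q = j then 1 else 0))"
      using H1i H2i ij by (intro sum.cong refl) auto
    also have "\<dots> = (\<Sum>p<Suc m. (if i = p then 1 else 0) * M p j)"
      using ij by (intro sum.cong refl) (simp add: delta_r sum_distrib_left[symmetric] mult.assoc)
    also have "\<dots> = M i j" using ij by (simp add: delta_l)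
    finally show "M i j = (\<Sum>k<Suc m. U i k * \<sigma>b k * V j k)" by simp
  qed
  then show ?case by blast
qed

lemma trace_norm_rect:
  assumes P: "P \<subseteq> {..<n}" and Q: "Q \<subseteq> {..<n}"
  shows "trace_norm n (\<lambda>i j. if i \<in> P \<and> j \<in> Q then 1 else 0) \<le> sqrt (real (card P)) * sqrt (real (card Q))"
proof -
  let ?M = "\<lambda>i j. if i \<in> P \<and> j \<in> Q then 1 else (0::real)"
  obtain U V \<sigma> where s: "svd n ?M U V \<sigma>" using svd_exists by blast
  define a where "a i = (if i \<in> P then 1 else (0::real))" for i
  define b where "b j = (if j \<in> Q then 1 else (0::real))" for j
  have Mab: "?M i j = a i * b j" for i j unfolding a_def b_def by auto
  have "trace_norm n ?M = (\<Sum>k<n. \<Sum>i<n. \<Sum>j<n. U i k * ?M i j * V j k)"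
    using trace_norm_svd[OF s] svd_self[OF s] by simp
  also have "\<dots> = (\<Sum>k<n. (\<Sum>i<n. U i k * a i) * (\<Sum>j<n. V j k * b j))"
    unfolding Mab by (simp add: sum_product mult_ac)
  also have "\<dots> \<le> sqrt (\<Sum>k<n. (\<Sum>i<n. U i k * a i)^2) * sqrt (\<Sum>k<n. (\<Sum>j<n. V j k * b j)^2)"
    by (rule cs_sqrt)
  also have "\<dots> \<le> sqrt (\<Sum>i<n. (a i)^2) * sqrt (\<Sum>j<n. (b j)^2)"
    using s unfolding svd_def
    by (intro mult_mono real_sqrt_le_mono bessel) (auto intro: sum_nonneg)
  also have "(\<Sum>i<n. (a i)^2) = real (card P)"
  proof -
    have "(\<Sum>i<n. (a i)^2) = (\<Sum>i<n. if i \<in> P then 1 else 0)" unfolding a_def by (rule sum.cong) auto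
    also have "\<dots> = real (card ({..<n} \<inter> P))" by (simp add: sum.If_cases)
    also have "{..<n} \<inter> P = P" using P by auto
    finally show ?thesis .
  qed
  also have "(\<Sum>j<n. (b j)^2) = real (card Q)"
  proof -
    have "(\<Sum>i<n. (b i)^2) = (\<Sum>i<n. if i \<in> Q then 1 else 0)" unfolding b_def by (rule sum.cong) auto
    also have "\<dots> = real (card ({..<n} \<inter> Q))" by (simp add: sum.If_cases)
    also have "{..<n} \<inter> Q = Q" using Q by auto
    finally show ?thesis .
  qed
  finally show ?thesis .
qed

lemma op_bdd:
  fixes S :: "nat set"
  assumes "finite S"
  shows "bdd_above {sqrt (\<Sum>i\<in>S. (\<Sum>j\<in>S. Y i j * x j)^2) | x. (\<Sum>j\<in>S. (x j)^2) \<le> 1}"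
proof (rule bdd_aboveI, clarify)
  fix x :: "nat \<Rightarrow> real" assume x: "(\<Sum>j\<in>S. (x j)^2) \<le> 1"
  have "(\<Sum>i\<in>S. (\<Sum>j\<in>S. Y i j * x j)^2) \<le> (\<Sum>i\<in>S. (\<Sum>j\<in>S. (Y i j)^2))"
  proof (rule sum_mono)
    fix i assume "i \<in> S"
    have "(\<Sum>j\<in>S. Y i j * x j)^2 \<le> (\<Sum>j\<in>S. (Y i j)^2) * (\<Sum>j\<in>S. (x j)^2)" by (rule Cauchy_Schwarz_ineq_sum)
    also have "\<dots> \<le> (\<Sum>j\<in>S. (Y i j)^2) * 1" using x by (intro mult_left_mono) (auto intro: sum_nonneg)
    finally show "(\<Sum>j\<in>S. Y i j * x j)^2 \<le> (\<Sum>j\<in>S. (Y i j)^2)" by simp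
  qed
  then show "sqrt (\<Sum>i\<in>S. (\<Sum>j\<in>S. Y i j * x j)^2) \<le> sqrt (\<Sum>i\<in>S. (\<Sum>j\<in>S. (Y i j)^2))"
    by simp
qed

lemma op_nonneg:
  fixes S :: "nat set"
  assumes "finite S"
  shows "0 \<le> op_norm_on S Y"
proof -
  have "sqrt (\<Sum>i\<in>S. (\<Sum>j\<in>S. Y i j * (\<lambda>_. 0) j)^2) \<in> {sqrt (\<Sum>i\<in>S. (\<Sum>j\<in>S. Y i j * x j)^2) | x. (\<Sum>j\<in>S. (x j)^2) \<le> 1}"
    by (intro CollectI exI[of _ "\<lambda>_. 0"]) simp
  then have "sqrt (\<Sum>i\<in>S. (\<Sum>j\<in>S. Y i j * (\<lambda>_. 0) j)^2) \<le> op_norm_on S Y"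
    unfolding op_norm_on_def by (intro cSup_upper op_bdd assms)
  then show ?thesis by simp
qed

lemma op_bound:
  fixes S :: "nat set"
  assumes "finite S"
  shows "\<bar>\<Sum>i\<in>S. \<Sum>j\<in>S. a i * Y i j * b j\<bar> \<le> op_norm_on S Y * sqrt (\<Sum>i\<in>S. (a i)^2) * sqrt (\<Sum>j\<in>S. (b j)^2)"
proof (cases "(\<Sum>j\<in>S. (b j)^2) = 0")
  case True
  then have "\<forall>j\<in>S. b j = 0" using sum_nonneg_eq_0_iff[of S "\<lambda>j. (b j)^2"] assms by auto
  then show ?thesis using True by simp
next
  case False
  define \<beta> where "\<beta> = sqrt (\<Sum>j\<in>S. (b j)^2)"
  have bpos: "0 < \<beta>" using False unfolding \<beta>_def by (simp add: sum_nonneg order_le_neq_trans)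
  have b2: "\<beta>^2 = (\<Sum>j\<in>S. (b j)^2)" unfolding \<beta>_def by (simp add: sum_nonneg)
  define x where "x j = b j / \<beta>" for j
  have "(\<Sum>j\<in>S. (x j)^2) = (\<Sum>j\<in>S. (b j)^2) / \<beta>^2" unfolding x_def by (simp add: power_divide sum_divide_distrib)
  also have "\<dots> = 1" using b2 bpos False by simp
  finally have x1: "(\<Sum>j\<in>S. (x j)^2) \<le> 1" by simp
  define c where "c i = (\<Sum>j\<in>S. Y i j * b j)" for i
  have cx: "(\<Sum>j\<in>S. Y i j * x j) = c i / \<beta>" for i unfolding c_def x_def by (simp add: sum_divide_distrib)
  have "sqrt (\<Sum>i\<in>S. (\<Sum>j\<in>S. Y i j * x j)^2) \<le> op_norm_on S Y"
    unfolding op_norm_on_def using x1 by (intro cSup_upper op_bdd assms) blast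
  then have "sqrt (\<Sum>i\<in>S. (c i)^2) / \<beta> \<le> op_norm_on S Y"
    unfolding cx using bpos by (simp add: power_divide sum_divide_distrib[symmetric] real_sqrt_divide)
  then have cb: "sqrt (\<Sum>i\<in>S. (c i)^2) \<le> op_norm_on S Y * \<beta>" using bpos by (simp add: field_simps)
  have "(\<Sum>i\<in>S. \<Sum>j\<in>S. a i * Y i j * b j) = (\<Sum>i\<in>S. a i * c i)" unfolding c_def by (simp add: sum_distrib_left mult.assoc)
  then have "\<bar>\<Sum>i\<in>S. \<Sum>j\<in>S. a i * Y i j * b j\<bar> \<le> sqrt (\<Sum>i\<in>S. (a i)^2) * sqrt (\<Sum>i\<in>S. (c i)^2)"
    using cs_abs by simp
  also have "\<dots> \<le> sqrt (\<Sum>i\<in>S. (a i)^2) * (op_norm_on S Y * \<beta>)" by (intro mult_left_mono cb) (simp add: sum_nonneg)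
  finally show ?thesis unfolding \<beta>_def by (simp add: mult_ac)
qed

lemma restr:
  fixes h :: "nat \<Rightarrow> real"
  assumes "finite S" "P \<subseteq> S"
  shows "(\<Sum>i\<in>S. if i \<in> P then h i else 0) = (\<Sum>i\<in>P. h i)"
proof -
  have "(\<Sum>i\<in>S. if i \<in> P then h i else 0) = sum h (S \<inter> P)" using sum.inter_restrict[OF assms(1), of h P] by simp
  also have "S \<inter> P = P" using assms by auto
  finally show ?thesis .
qed

lemma trace_op:
  fixes S P Q :: "nat set"
  assumes S: "S \<subseteq> {..<n}" and P: "P \<subseteq> S" and Q: "Q \<subseteq> S"
    and f: "\<forall>i\<in>P. \<bar>f i\<bar> \<le> 1" and g: "\<forall>j\<in>Q. \<bar>g j\<bar> \<le> 1"
  shows "\<bar>\<Sum>i\<in>P. \<Sum>j\<in>Q. f i * Y i j * g j * N i j\<bar> \<le> op_norm_on S Y * trace_norm n N"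
proof -
  have fS: "finite S" using S finite_subset by blast
  have fP: "finite P" using P fS finite_subset by blast
  have fQ: "finite Q" using Q fS finite_subset by blast
  obtain U V \<sigma> where s: "svd n N U V \<sigma>" using svd_exists by blast
  have tn: "trace_norm n N = (\<Sum>k<n. \<sigma> k)" by (rule trace_norm_svd[OF s])
  define a where "a k i = (if i \<in> P then f i * U i k else 0)" for k i
  define b where "b k j = (if j \<in> Q then g j * V j k else 0)" for k j
  define X where "X k = (\<Sum>i\<in>S. \<Sum>j\<in>S. a k i * Y i j * b k j)" for k
  have "(\<Sum>i\<in>P. \<Sum>j\<in>Q. f i * Y i j * g j * N i j) = (\<Sum>i\<in>P. \<Sum>j\<in>Q. \<Sum>k<n. \<sigma> k * (f i * U i k * Y i j * (g j * V j k)))"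
  proof (intro sum.cong refl)
    fix i j assume "i \<in> P" "j \<in> Q"
    then have "i < n" "j < n" using P Q S by auto
    then have "N i j = (\<Sum>k<n. U i k * \<sigma> k * V j k)" using s unfolding svd_def by auto
    then show "f i * Y i j * g j * N i j = (\<Sum>k<n. \<sigma> k * (f i * U i k * Y i j * (g j * V j k)))"
      by (simp add: sum_distrib_left mult_ac)
  qed
  also have "\<dots> = (\<Sum>i\<in>P. \<Sum>k<n. \<Sum>j\<in>Q. \<sigma> k * (f i * U i k * Y i j * (g j * V j k)))"
    by (rule sum.cong[OF refl], rule sum.swap)
  also have "\<dots> = (\<Sum>k<n. \<Sum>i\<in>P. \<Sum>j\<in>Q. \<sigma> k * (f i * U i k * Y i j * (g j * V j k)))"
    by (rule sum.swap)
  also have "\<dots> = (\<Sum>k<n. \<sigma> k * X k)"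
  proof (rule sum.cong[OF refl])
    fix k
    have "X k = (\<Sum>i\<in>S. if i \<in> P then (\<Sum>j\<in>S. if j \<in> Q then f i * U i k * Y i j * (g j * V j k) else 0) else 0)"
      unfolding X_def a_def b_def by (intro sum.cong refl) (auto intro: sum.cong)
    also have "\<dots> = (\<Sum>i\<in>P. \<Sum>j\<in>Q. f i * U i k * Y i j * (g j * V j k))"
      using restr[OF fS P] restr[OF fS Q] by simp
    finally show "(\<Sum>i\<in>P. \<Sum>j\<in>Q. \<sigma> k * (f i * U i k * Y i j * (g j * V j k))) = \<sigma> k * X k"
      by (simp add: sum_distrib_left)
  qed
  finally have eq: "(\<Sum>i\<in>P. \<Sum>j\<in>Q. f i * Y i j * g j * N i j) = (\<Sum>k<n. \<sigma> k * X k)" .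
  have opn: "0 \<le> op_norm_on S Y" by (rule op_nonneg[OF fS])
  have Xb: "\<bar>X k\<bar> \<le> op_norm_on S Y" if k: "k < n" for k
  proof -
    have a1: "(\<Sum>i\<in>S. (a k i)^2) \<le> 1"
    proof -
      have "(\<Sum>i\<in>S. (a k i)^2) \<le> (\<Sum>i\<in>S. (U i k)^2)"
        unfolding a_def
      proof (rule sum_mono)
        fix i
        have "i \<in> P \<Longrightarrow> (f i * U i k)^2 \<le> (U i k)^2"
          using f by (simp add: power_mult_distrib abs_square_le_1 mult_left_le_one_le)
        then show "(if i \<in> P then f i * U i k else 0)^2 \<le> (U i k)^2" by auto
      qed
      also have "\<dots> \<le> (\<Sum>i<n. (U i k)^2)" using S by (intro sum_mono2) auto
      also have "\<dots> = 1" using s k orthm_col_norm unfolding svd_def by auto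
      finally show ?thesis .
    qed
    have b1: "(\<Sum>i\<in>S. (b k i)^2) \<le> 1"
    proof -
      have "(\<Sum>i\<in>S. (b k i)^2) \<le> (\<Sum>i\<in>S. (V i k)^2)"
        unfolding b_def
      proof (rule sum_mono)
        fix i
        have "i \<in> Q \<Longrightarrow> (g i * V i k)^2 \<le> (V i k)^2"
          using g by (simp add: power_mult_distrib abs_square_le_1 mult_left_le_one_le)
        then show "(if i \<in> Q then g i * V i k else 0)^2 \<le> (V i k)^2" by auto
      qed
      also have "\<dots> \<le> (\<Sum>i<n. (V i k)^2)" using S by (intro sum_mono2) auto
      also have "\<dots> = 1" using s k orthm_col_norm unfolding svd_def by auto
      finally show ?thesis .
    qed
    have "\<bar>X k\<bar> \<le> op_norm_on S Y * sqrt (\<Sum>i\<in>S. (a k i)^2) * sqrt (\<Sum>j\<in>S. (b k j)^2)"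
      unfolding X_def by (rule op_bound[OF fS])
    also have "\<dots> \<le> op_norm_on S Y * 1 * 1"
      using a1 b1 opn by (intro mult_mono) (auto simp: sum_nonneg)
    finally show ?thesis by simp
  qed
  have "\<bar>\<Sum>k<n. \<sigma> k * X k\<bar> \<le> (\<Sum>k<n. \<bar>\<sigma> k * X k\<bar>)" by (rule sum_abs)
  also have "\<dots> \<le> (\<Sum>k<n. \<sigma> k * op_norm_on S Y)"
  proof (rule sum_mono)
    fix k assume "k \<in> {..<n}"
    then have "0 \<le> \<sigma> k" "\<bar>X k\<bar> \<le> op_norm_on S Y" using s Xb unfolding svd_def by auto
    then show "\<bar>\<sigma> k * X k\<bar> \<le> \<sigma> k * op_norm_on S Y" by (simp add: abs_mult mult_left_mono)
  qed
  also have "\<dots> = op_norm_on S Y * trace_norm n N" unfolding tn by (simp add: sum_distrib_left mult.commute)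
  finally show ?thesis unfolding eq .
qed

lemma trace_norm_nonneg: "0 \<le> trace_norm n N"
proof -
  obtain U V \<sigma> where s: "svd n N U V \<sigma>" using svd_exists by blast
  then show ?thesis using trace_norm_svd[OF s] unfolding svd_def by (auto intro: sum_nonneg)
qed

locale bs =
  fixes n :: nat and A F Y Z :: "nat \<Rightarrow> nat \<Rightarrow> real" and \<zeta> d K \<gamma> :: real
    and S :: "nat set" and lt :: "nat \<Rightarrow> real"
  assumes zeta_pos: "0 < \<zeta>" and zeta_lt1: "\<zeta> < 1" and d_pos: "0 < d" and K_big: "K \<ge> 10^4"
    and lab: "is_labelling n lt" and Ssub: "S \<subseteq> {..<n}" and Scard: "real (card S) \<ge> (1 - \<gamma>) * real n"
    and gam: "\<gamma> \<le> 0.1 * \<zeta>" and npos: "0 < n"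
    and Fpos: "\<forall>i\<in>S. \<forall>j\<in>S. F i j * (lt i * lt j) \<ge> 0"
    and dec: "\<forall>i\<in>S. \<forall>j\<in>S. A i j - F i j = Y i j + Z i j"
    and opY: "op_norm_on S Y \<le> K * d"
    and Zb: "\<forall>i\<in>S. \<forall>j\<in>S. \<bar>Z i j\<bar> \<le> K * d / (\<zeta> * real n)"
    and res: "\<forall>T. T \<subseteq> S \<and> real (card T) \<ge> (1 - \<zeta>) * real n \<longrightarrow>
           resolvable_on T (\<lambda>i j. (A i j - F i j) * (lt i * lt j))
             (10 * d * K^3) (0.5 * d * K * (\<gamma> + (real n - real (card T)) / real n))"
begin

definition X where "X i j = (A i j - F i j) * (lt i * lt j)"
definition c where "c = K * d / (\<zeta> * real n)"

lemma finS: "finite S" using Ssub finite_subset by blast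

lemma cS: "real (card S) \<le> real n"
  using card_mono[OF _ Ssub] by simp

lemma gam0: "0 \<le> \<gamma>"
proof -
  have "(1 - \<gamma>) * real n \<le> real n" using Scard cS by linarith
  then have "0 \<le> \<gamma> * real n" by (simp add: algebra_simps)
  then show ?thesis using npos by (simp add: zero_le_mult_iff)
qed

lemma lt_sq: "i \<in> S \<Longrightarrow> (lt i)^2 = 1"
  using lab Ssub unfolding is_labelling_def by auto

lemma lt_abs: "i \<in> S \<Longrightarrow> \<bar>lt i\<bar> = 1"
  using lab Ssub unfolding is_labelling_def by auto

lemma c_pos: "0 < c" unfolding c_def using K_big d_pos zeta_pos npos by simp

lemma Kd_pos: "0 < K * d" using K_big d_pos by simp

lemma XG:
  assumes P: "P \<subseteq> S" and Q: "Q \<subseteq> S"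
  shows "\<bar>\<Sum>i\<in>P. \<Sum>j\<in>Q. p i * X i j * q j\<bar> \<le>
     K * d * sqrt (\<Sum>i\<in>P. (p i)^2) * sqrt (\<Sum>j\<in>Q. (q j)^2) + c * (\<Sum>i\<in>P. \<bar>p i\<bar>) * (\<Sum>j\<in>Q. \<bar>q j\<bar>)"
proof -
  have fP: "finite P" using P finS finite_subset by blast
  have fQ: "finite Q" using Q finS finite_subset by blast
  have split: "(\<Sum>i\<in>P. \<Sum>j\<in>Q. p i * X i j * q j) =
      (\<Sum>i\<in>P. \<Sum>j\<in>Q. (p i * lt i) * Y i j * (q j * lt j)) + (\<Sum>i\<in>P. \<Sum>j\<in>Q. (p i * lt i) * Z i j * (q j * lt j))"
    unfolding sum.distrib[symmetric]
  proof (intro sum.cong refl)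
    fix i j assume "i \<in> P" "j \<in> Q"
    then have e: "A i j - F i j = Y i j + Z i j" using dec P Q by auto
    show "p i * X i j * q j = p i * lt i * Y i j * (q j * lt j) + p i * lt i * Z i j * (q j * lt j)"
      unfolding X_def e by (simp add: algebra_simps)
  qed
  define a where "a i = (if i \<in> P then p i * lt i else 0)" for i
  define b where "b j = (if j \<in> Q then q j * lt j else 0)" for j
  have Yeq: "(\<Sum>i\<in>P. \<Sum>j\<in>Q. (p i * lt i) * Y i j * (q j * lt j)) = (\<Sum>i\<in>S. \<Sum>j\<in>S. a i * Y i j * b j)"
  proof -
    have "(\<Sum>i\<in>S. \<Sum>j\<in>S. a i * Y i j * b j) =
          (\<Sum>i\<in>S. if i \<in> P then (\<Sum>j\<in>S. if j \<in> Q then (p i * lt i) * Y i j * (q j * lt j) else 0) else 0)"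
      unfolding a_def b_def by (intro sum.cong refl) (auto intro: sum.cong)
    also have "\<dots> = (\<Sum>i\<in>P. \<Sum>j\<in>Q. (p i * lt i) * Y i j * (q j * lt j))"
      using restr[OF finS P] restr[OF finS Q] by simp
    finally show ?thesis by simp
  qed
  have a2: "(\<Sum>i\<in>S. (a i)^2) = (\<Sum>i\<in>P. (p i)^2)"
  proof -
    have "(\<Sum>i\<in>S. (a i)^2) = (\<Sum>i\<in>S. if i \<in> P then (p i)^2 else 0)"
      unfolding a_def using lt_sq P by (intro sum.cong refl) (auto simp: power_mult_distrib)
    then show ?thesis using restr[OF finS P] by simp
  qed
  have b2: "(\<Sum>i\<in>S. (b i)^2) = (\<Sum>i\<in>Q. (q i)^2)"
  proof -
    have "(\<Sum>i\<in>S. (b i)^2) = (\<Sum>i\<in>S. if i \<in> Q then (q i)^2 else 0)"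
      unfolding b_def using lt_sq Q by (intro sum.cong refl) (auto simp: power_mult_distrib)
    then show ?thesis using restr[OF finS Q] by simp
  qed
  have Yb: "\<bar>\<Sum>i\<in>P. \<Sum>j\<in>Q. (p i * lt i) * Y i j * (q j * lt j)\<bar> \<le> K * d * sqrt (\<Sum>i\<in>P. (p i)^2) * sqrt (\<Sum>j\<in>Q. (q j)^2)"
  proof -
    have "\<bar>\<Sum>i\<in>P. \<Sum>j\<in>Q. (p i * lt i) * Y i j * (q j * lt j)\<bar> \<le> op_norm_on S Y * sqrt (\<Sum>i\<in>S. (a i)^2) * sqrt (\<Sum>j\<in>S. (b j)^2)"
      unfolding Yeq by (rule op_bound[OF finS])
    also have "\<dots> \<le> K * d * sqrt (\<Sum>i\<in>P. (p i)^2) * sqrt (\<Sum>j\<in>Q. (q j)^2)"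
      unfolding a2 b2 using opY by (intro mult_right_mono) (auto simp: sum_nonneg)
    finally show ?thesis .
  qed
  have Zb': "\<bar>\<Sum>i\<in>P. \<Sum>j\<in>Q. (p i * lt i) * Z i j * (q j * lt j)\<bar> \<le> c * (\<Sum>i\<in>P. \<bar>p i\<bar>) * (\<Sum>j\<in>Q. \<bar>q j\<bar>)"
  proof -
    have "\<bar>\<Sum>i\<in>P. \<Sum>j\<in>Q. (p i * lt i) * Z i j * (q j * lt j)\<bar> \<le> (\<Sum>i\<in>P. \<bar>\<Sum>j\<in>Q. (p i * lt i) * Z i j * (q j * lt j)\<bar>)"
      by (rule sum_abs)
    also have "\<dots> \<le> (\<Sum>i\<in>P. \<Sum>j\<in>Q. \<bar>(p i * lt i) * Z i j * (q j * lt j)\<bar>)"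
      by (intro sum_mono sum_abs)
    also have "\<dots> \<le> (\<Sum>i\<in>P. \<Sum>j\<in>Q. c * \<bar>p i\<bar> * \<bar>q j\<bar>)"
    proof (intro sum_mono)
      fix i j assume ij: "i \<in> P" "j \<in> Q"
      then have "\<bar>Z i j\<bar> \<le> c" "\<bar>lt i\<bar> = 1" "\<bar>lt j\<bar> = 1" using Zb P Q lt_abs unfolding c_def by auto
      then show "\<bar>(p i * lt i) * Z i j * (q j * lt j)\<bar> \<le> c * \<bar>p i\<bar> * \<bar>q j\<bar>"
        by (simp add: abs_mult mult_right_mono mult_left_mono mult_ac)
    qed
    also have "\<dots> = c * (\<Sum>i\<in>P. \<bar>p i\<bar>) * (\<Sum>j\<in>Q. \<bar>q j\<bar>)"
      by (simp add: sum_distrib_left sum_distrib_right mult_ac)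
    finally show ?thesis .
  qed
  show ?thesis unfolding split using Yb Zb' by linarith
qed

lemma XN:
  assumes P: "P \<subseteq> S" and Q: "Q \<subseteq> S" and N0: "\<forall>i<n. \<forall>j<n. 0 \<le> N i j"
  shows "\<bar>\<Sum>i\<in>P. \<Sum>j\<in>Q. X i j * N i j\<bar> \<le> K * d * trace_norm n N + c * (\<Sum>i\<in>P. \<Sum>j\<in>Q. N i j)"
proof -
  have split: "(\<Sum>i\<in>P. \<Sum>j\<in>Q. X i j * N i j) =
      (\<Sum>i\<in>P. \<Sum>j\<in>Q. lt i * Y i j * lt j * N i j) + (\<Sum>i\<in>P. \<Sum>j\<in>Q. lt i * Z i j * lt j * N i j)"
    unfolding sum.distrib[symmetric]
  proof (intro sum.cong refl)
    fix i j assume "i \<in> P" "j \<in> Q"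
    then have e: "A i j - F i j = Y i j + Z i j" using dec P Q by auto
    show "X i j * N i j = lt i * Y i j * lt j * N i j + lt i * Z i j * lt j * N i j"
      unfolding X_def e by (simp add: algebra_simps)
  qed
  have Yb: "\<bar>\<Sum>i\<in>P. \<Sum>j\<in>Q. lt i * Y i j * lt j * N i j\<bar> \<le> K * d * trace_norm n N"
  proof -
    have "\<bar>\<Sum>i\<in>P. \<Sum>j\<in>Q. lt i * Y i j * lt j * N i j\<bar> \<le> op_norm_on S Y * trace_norm n N"
      using P Q lt_abs by (intro trace_op[OF Ssub]) auto
    also have "\<dots> \<le> K * d * trace_norm n N" using opY trace_norm_nonneg by (intro mult_right_mono) auto
    finally show ?thesis .
  qed
  have Zb': "\<bar>\<Sum>i\<in>P. \<Sum>j\<in>Q. lt i * Z i j * lt j * N i j\<bar> \<le> c * (\<Sum>i\<in>P. \<Sum>j\<in>Q. N i j)"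
  proof -
    have "\<bar>\<Sum>i\<in>P. \<Sum>j\<in>Q. lt i * Z i j * lt j * N i j\<bar> \<le> (\<Sum>i\<in>P. \<bar>\<Sum>j\<in>Q. lt i * Z i j * lt j * N i j\<bar>)"
      by (rule sum_abs)
    also have "\<dots> \<le> (\<Sum>i\<in>P. \<Sum>j\<in>Q. \<bar>lt i * Z i j * lt j * N i j\<bar>)"
      by (intro sum_mono sum_abs)
    also have "\<dots> \<le> (\<Sum>i\<in>P. \<Sum>j\<in>Q. c * N i j)"
    proof (intro sum_mono)
      fix i j assume ij: "i \<in> P" "j \<in> Q"
      then have "i < n" "j < n" using P Q Ssub by auto
      then have "\<bar>Z i j\<bar> \<le> c" "\<bar>lt i\<bar> = 1" "\<bar>lt j\<bar> = 1" "0 \<le> N i j"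
        using Zb P Q lt_abs N0 ij unfolding c_def by auto
      then show "\<bar>lt i * Z i j * lt j * N i j\<bar> \<le> c * N i j"
        by (simp add: abs_mult mult_right_mono)
    qed
    also have "\<dots> = c * (\<Sum>i\<in>P. \<Sum>j\<in>Q. N i j)" by (simp add: sum_distrib_left)
    finally show ?thesis .
  qed
  show ?thesis unfolding split using Yb Zb' by linarith
qed

lemma regimeA: "\<zeta> \<le> 1/10^8"
proof (rule ccontr)
  assume big: "\<not> \<zeta> \<le> 1/10^8"
  have Spos: "0 < real (card S)"
  proof -
    have "(1 - \<gamma>) * real n > 0" using gam zeta_lt1 npos by simp
    then show ?thesis using Scard by linarith
  qed
  have TS: "S \<subseteq> S \<and> real (card S) \<ge> (1 - \<zeta>) * real n"
  proof -
    have "(1 - \<zeta>) * real n \<le> (1 - \<gamma>) * real n" using gam zeta_pos by (intro mult_right_mono) auto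
    then show ?thesis using Scard by simp
  qed
  have r: "resolvable_on S (\<lambda>i j. (A i j - F i j) * (lt i * lt j))
             (10 * d * K^3) (0.5 * d * K * (\<gamma> + (real n - real (card S)) / real n))"
    using res TS by blast
  define x :: "nat \<Rightarrow> real" where "x i = 1/10^6" for i
  have sx: "(\<Sum>i\<in>S. x i) = real (card S) / 10^6" unfolding x_def by simp
  have "(\<Sum>i\<in>S. \<Sum>j\<in>S. X i j * x i) \<ge> 10 * d * K^3 * (\<Sum>i\<in>S. x i) - 0.5 * d * K * (\<gamma> + (real n - real (card S)) / real n) * real (card S)"
  proof -
    have p6: "(10::real) powi (-6) = 1/10^6" by (simp add: power_int_def field_simps)
    have "(\<forall>i\<in>S. 0 \<le> x i \<and> x i \<le> 1) \<and> (\<Sum>i\<in>S. x i) \<le> 10 powi (-6) * real (card S)"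
      unfolding p6 sx x_def by simp
    then show ?thesis using r unfolding resolvable_on_def X_def by blast
  qed
  moreover have "(\<Sum>i\<in>S. \<Sum>j\<in>S. X i j * x i) = (\<Sum>i\<in>S. \<Sum>j\<in>S. (\<lambda>_. 1) i * X i j * (\<lambda>_. 1) j) / 10^6"
    unfolding x_def by (simp add: sum_divide_distrib)
  moreover have "\<bar>\<Sum>i\<in>S. \<Sum>j\<in>S. (\<lambda>_. 1) i * X i j * (\<lambda>_. 1) j\<bar> \<le> K * d * real (card S) + c * real (card S) * real (card S)"
  proof -
    have "sqrt (real (card S)) * sqrt (real (card S)) = real (card S)" by simp
    then show ?thesis using XG[of S S "\<lambda>_. 1" "\<lambda>_. 1"] by (simp add: mult.assoc)
  qed
  moreover have "(real n - real (card S)) / real n \<le> \<gamma>"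
    using Scard npos by (simp add: field_simps)
  ultimately have ineq: "10 * d * K^3 * (real (card S) / 10^6) - 0.5 * d * K * (2 * \<gamma>) * real (card S)
       \<le> (K * d * real (card S) + c * real (card S) * real (card S)) / 10^6"
    unfolding sx
  proof -
    assume a1: "10 * d * K ^ 3 * (real (card S) / 10 ^ 6) - 0.5 * d * K * (\<gamma> + (real n - real (card S)) / real n) * real (card S) \<le> (\<Sum>i\<in>S. \<Sum>j\<in>S. X i j * x i)"
      and a2: "(\<Sum>i\<in>S. \<Sum>j\<in>S. X i j * x i) = (\<Sum>i\<in>S. \<Sum>j\<in>S. (\<lambda>_. 1) i * X i j * (\<lambda>_. 1) j) / 10 ^ 6"
      and a3: "\<bar>\<Sum>i\<in>S. \<Sum>j\<in>S. (\<lambda>_. 1) i * X i j * (\<lambda>_. 1) j\<bar> \<le> K * d * real (card S) + c * real (card S) * real (card S)"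
      and a4: "(real n - real (card S)) / real n \<le> \<gamma>"
    have "0.5 * d * K * (\<gamma> + (real n - real (card S)) / real n) * real (card S) \<le> 0.5 * d * K * (2 * \<gamma>) * real (card S)"
      using a4 d_pos K_big by (intro mult_right_mono mult_left_mono) auto
    moreover have "(\<Sum>i\<in>S. \<Sum>j\<in>S. (\<lambda>_. 1) i * X i j * (\<lambda>_. 1) j) / 10 ^ 6 \<le> (K * d * real (card S) + c * real (card S) * real (card S)) / 10^6"
      using a3 by (intro divide_right_mono) auto
    ultimately show ?thesis using a1 a2 by linarith
  qed
  have "c * real (card S) \<le> K * d / \<zeta>"
  proof -
    have "K * d * real (card S) \<le> K * d * real n" using cS Kd_pos by (intro mult_left_mono) auto
    then show ?thesis unfolding c_def using npos zeta_pos by (simp add: field_simps)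
  qed
  then have "c * real (card S) * real (card S) \<le> K * d / \<zeta> * real (card S)"
    using Spos by (intro mult_right_mono) auto
  with ineq have "10 * d * K^3 * (real (card S) / 10^6) - d * K * \<gamma> * real (card S)
       \<le> (K * d * real (card S) + K * d / \<zeta> * real (card S)) / 10^6" by (auto simp: divide_right_mono)
  moreover have "10 * d * K^3 * (real (card S) / 10^6) - d * K * \<gamma> * real (card S) = (d * K * real (card S)) * (10 * K^2 / 10^6 - \<gamma>)"
    by (simp add: power2_eq_square power3_eq_cube algebra_simps)
  moreover have "(K * d * real (card S) + K * d / \<zeta> * real (card S)) / 10^6 = (d * K * real (card S)) * ((1 + 1/\<zeta>)/10^6)"
    by (simp add: algebra_simps add_divide_distrib)
  ultimately have "(d * K * real (card S)) * (10 * K^2 / 10^6 - \<gamma>) \<le> (d * K * real (card S)) * ((1 + 1/\<zeta>)/10^6)"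
    by linarith
  moreover have "0 < d * K * real (card S)" using Spos d_pos K_big by simp
  ultimately have le0: "10 * K^2 / 10^6 - \<gamma> \<le> (1 + 1/\<zeta>)/10^6"
    using mult_le_cancel_left_pos by blast
  have "1/\<zeta> < 10^8" using big zeta_pos by (simp add: field_simps)
  moreover have "K^2 \<ge> 10^8" using K_big power_mono[of "10^4" K 2] by simp
  moreover have "\<gamma> \<le> 1" using gam zeta_lt1 by simp
  ultimately show False using le0 by (simp add: field_simps)
qed

end

lemma restr2:
  fixes h :: "nat \<Rightarrow> nat \<Rightarrow> real" and n :: nat
  assumes "P \<subseteq> {..<n}" "Q \<subseteq> {..<n}"
  shows "(\<Sum>i<n. \<Sum>j<n. if i \<in> P \<and> j \<in> Q then h i j else 0) = (\<Sum>i\<in>P. \<Sum>j\<in>Q. h i j)"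
proof -
  have "(\<Sum>i<n. \<Sum>j<n. if i \<in> P \<and> j \<in> Q then h i j else 0) =
        (\<Sum>i<n. if i \<in> P then (\<Sum>j<n. if j \<in> Q then h i j else 0) else 0)"
    by (intro sum.cong refl) auto
  also have "\<dots> = (\<Sum>i<n. if i \<in> P then (\<Sum>j\<in>Q. h i j) else 0)"
  proof -
    have inner: "(\<Sum>j<n. if j \<in> Q then h i j else 0) = (\<Sum>j\<in>Q. h i j)" for i
      using restr[of "{..<n}" Q "h i"] assms by simp
    show ?thesis using inner by (intro sum.cong refl) auto
  qed
  also have "\<dots> = (\<Sum>i\<in>P. \<Sum>j\<in>Q. h i j)" using restr[of "{..<n}" P] assms by simp
  finally show ?thesis .
qed

lemma card_rect:
  fixes n :: nat
  assumes "P \<subseteq> {..<n}" "Q \<subseteq> {..<n}"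
  shows "(\<Sum>i<n. \<Sum>j<n. \<bar>if i \<in> P \<and> j \<in> Q then 1 else 0\<bar>) = real (card P) * real (card Q)"
proof -
  have "(\<Sum>i<n. \<Sum>j<n. \<bar>if i \<in> P \<and> j \<in> Q then 1 else (0::real)\<bar>) = (\<Sum>i<n. \<Sum>j<n. if i \<in> P \<and> j \<in> Q then 1 else 0)"
    by (intro sum.cong refl) auto
  also have "\<dots> = (\<Sum>i\<in>P. \<Sum>j\<in>Q. 1)" by (rule restr2[OF assms])
  finally show ?thesis by simp
qed

context bs begin

lemma zeta_small: "\<zeta> \<le> 1/10^8" by (rule regimeA)

definition Bad where "Bad l = {i. i < n \<and> (i \<notin> S \<or> l i \<noteq> lt i)}"
definition Good where "Good l = {i \<in> S. l i = lt i}"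

lemma Good_sub: "Good l \<subseteq> S" unfolding Good_def by auto
lemma Good_sub_n: "Good l \<subseteq> {..<n}" unfolding Good_def using Ssub by auto
lemma Bad_sub: "Bad l \<subseteq> {..<n}" unfolding Bad_def by auto
lemma Good_iff: "i < n \<Longrightarrow> i \<in> Good l \<longleftrightarrow> i \<notin> Bad l" unfolding Good_def Bad_def using Ssub by auto
lemma card_GB: "card (Good l) + card (Bad l) = n"
proof -
  have "Good l \<union> Bad l = {..<n}" using Good_iff Good_sub_n Bad_sub by blast
  moreover have "Good l \<inter> Bad l = {}" using Good_iff Good_sub_n by blast
  ultimately have "card (Good l) + card (Bad l) = card {..<n}"
    using card_Un_disjoint[of "Good l" "Bad l"] finite_subset[OF Good_sub_n] finite_subset[OF Bad_sub] by simp
  then show ?thesis by simp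
qed

lemma nS_le: "real n - real (card S) \<le> \<gamma> * real n" using Scard by (simp add: algebra_simps)

lemma step1:
  assumes labl: "is_labelling n l"
    and qz: "real (card (Bad l)) + \<gamma> * real n \<le> \<zeta> * real n"
    and opt: "boost_optimal n A l \<zeta> d K \<rho> w W N"
  shows "\<rho> * real n \<le> real (card (Bad l)) + \<gamma> * real n"
proof -
  let ?B = "Bad l" and ?G = "Good l"
  define cb where "cb = real (card ?B)"
  define \<rho>0 where "\<rho>0 = (cb + \<gamma> * real n) / real n"
  have nr: "0 < real n" using npos by simp
  have r0n: "\<rho>0 * real n = cb + \<gamma> * real n" unfolding \<rho>0_def using nr by simp
  have cb0: "0 \<le> cb" unfolding cb_def by simp
  have r00: "0 \<le> \<rho>0" unfolding \<rho>0_def using cb0 gam0 nr by simp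
  have cbr: "cb \<le> \<rho>0 * real n" using r0n gam0 nr by simp
  define w0 where "w0 i = (if i \<in> ?B then 1 else (0::real))" for i
  define N0 where "N0 i j = (if i \<in> ?B \<and> j \<in> ?B then 1 else (0::real))" for i j
  define W0 where "W0 i j = 1 - w0 i - w0 j + N0 i j" for i j
  have W0G: "W0 i j = (if i \<in> ?G \<and> j \<in> ?G then 1 else 0)" if "i < n" "j < n" for i j
    using Good_iff[OF that(1), of l] Good_iff[OF that(2), of l] unfolding W0_def w0_def N0_def by auto
  have feas: "boost_feasible n A l \<zeta> d K \<rho>0 w0 W0 N0"
    unfolding boost_feasible_def
  proof (intro conjI allI impI)
    show "0 \<le> \<rho>0" by (rule r00)
    show "\<rho>0 \<le> \<zeta>" unfolding \<rho>0_def using qz nr by (simp add: cb_def field_simps)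
    show "pseudorect n \<rho>0 N0"
      unfolding pseudorect_def
    proof (intro conjI allI impI)
      show "0 \<le> N0 i j" "N0 i j \<le> 1" for i j unfolding N0_def by auto
      have "(\<Sum>i<n. \<Sum>j<n. \<bar>N0 i j\<bar>) = cb * cb" unfolding N0_def cb_def using card_rect[OF Bad_sub Bad_sub] .
      also have "\<dots> \<le> (\<rho>0 * real n) * (\<rho>0 * real n)" using cbr cb0 by (intro mult_mono) auto
      finally show "(\<Sum>i<n. \<Sum>j<n. \<bar>N0 i j\<bar>) \<le> \<rho>0^2 * (real n)^2" by (simp add: power2_eq_square mult_ac)
      have "trace_norm n N0 \<le> sqrt cb * sqrt cb" unfolding N0_def cb_def by (rule trace_norm_rect[OF Bad_sub Bad_sub])
      also have "\<dots> = cb" using cb0 by simp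
      finally show "trace_norm n N0 \<le> \<rho>0 * real n" using cbr by simp
    qed
    show "0 \<le> w0 i" "w0 i \<le> 1" for i unfolding w0_def by auto
    have "(\<Sum>i<n. w0 i) = cb" unfolding w0_def cb_def using restr[of "{..<n}" ?B "\<lambda>_. 1"] Bad_sub by simp
    then show "(\<Sum>i<n. w0 i) \<le> \<rho>0 * real n" using cbr by simp
    show "0 \<le> W0 i j" if "i < n" "j < n" for i j using W0G[OF that] by simp
    show "W0 i j = 1 - w0 i - w0 j + N0 i j" for i j unfolding W0_def ..
  next
    fix \<rho>' M x
    assume a: "\<rho>0 / K \<le> \<rho>' \<and> \<rho>' \<le> \<zeta> \<and> row_selector n \<rho>' (K * \<rho>') M x"
    then have r1: "\<rho>0 / K \<le> \<rho>'" and r2: "\<rho>' \<le> \<zeta>" and rs: "row_selector n \<rho>' (K * \<rho>') M x" by auto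
    obtain N' where M01: "\<forall>i<n. \<forall>j<n. 0 \<le> M i j \<and> M i j \<le> 1" and x01: "\<forall>i<n. 0 \<le> x i \<and> x i \<le> 1"
      and sx: "(\<Sum>i<n. x i) \<le> \<rho>' * real n" and pN: "pseudorect n (sqrt (\<rho>' * (K * \<rho>'))) N'"
      and MN: "\<forall>i<n. \<forall>j<n. M i j = x i - N' i j"
      using rs unfolding row_selector_def by blast
    have Kpos: "0 < K" using K_big by simp
    have rp0: "0 \<le> \<rho>'" using r1 r00 Kpos by (meson divide_nonneg_pos order_trans)
    have sq: "sqrt (\<rho>' * (K * \<rho>')) = sqrt K * \<rho>'"
      using rp0 Kpos by (simp add: real_sqrt_mult mult_ac)
    have sK: "sqrt K \<le> K"
    proof -
      have s1: "1 \<le> sqrt K" using K_big by simp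
      have "sqrt K * 1 \<le> sqrt K * sqrt K" using s1 by (intro mult_left_mono) auto
      then show ?thesis using K_big by simp
    qed
    have r0K: "\<rho>0 * real n \<le> K * \<rho>' * real n" using r1 Kpos nr by (simp add: field_simps)
    have L1: "(\<Sum>i<n. \<Sum>j<n. A i j * (l i * l j) * W0 i j * M i j) = (\<Sum>i\<in>?G. \<Sum>j\<in>?G. A i j * (lt i * lt j) * M i j)"
    proof -
      have "(\<Sum>i<n. \<Sum>j<n. A i j * (l i * l j) * W0 i j * M i j) =
            (\<Sum>i<n. \<Sum>j<n. if i \<in> ?G \<and> j \<in> ?G then A i j * (lt i * lt j) * M i j else 0)"
        using W0G unfolding Good_def by (intro sum.cong refl) auto
      also have "\<dots> = (\<Sum>i\<in>?G. \<Sum>j\<in>?G. A i j * (lt i * lt j) * M i j)" by (rule restr2[OF Good_sub_n Good_sub_n])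
      finally show ?thesis .
    qed
    have L2: "(\<Sum>i\<in>?G. \<Sum>j\<in>?G. X i j * M i j) \<le> (\<Sum>i\<in>?G. \<Sum>j\<in>?G. A i j * (lt i * lt j) * M i j)"
    proof (intro sum_mono)
      fix i j assume ij: "i \<in> ?G" "j \<in> ?G"
      then have "i \<in> S" "j \<in> S" "i < n" "j < n" using Good_sub Good_sub_n by auto
      then have "0 \<le> F i j * (lt i * lt j)" "0 \<le> M i j" using Fpos M01 by auto
      then have "0 \<le> F i j * (lt i * lt j) * M i j" by simp
      then show "X i j * M i j \<le> A i j * (lt i * lt j) * M i j" unfolding X_def by (simp add: algebra_simps)
    qed
    have L3: "(\<Sum>i\<in>?G. \<Sum>j\<in>?G. X i j * M i j) = (\<Sum>i\<in>?G. \<Sum>j\<in>?G. X i j * x i) - (\<Sum>i\<in>?G. \<Sum>j\<in>?G. X i j * N' i j)"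
    proof -
      have "(\<Sum>i\<in>?G. \<Sum>j\<in>?G. X i j * M i j) = (\<Sum>i\<in>?G. \<Sum>j\<in>?G. X i j * x i - X i j * N' i j)"
      proof (intro sum.cong refl)
        fix i j assume "i \<in> ?G" "j \<in> ?G"
        then have "i < n" "j < n" using Good_sub_n by auto
        then have "M i j = x i - N' i j" using MN by auto
        then show "X i j * M i j = X i j * x i - X i j * N' i j" by (simp add: right_diff_distrib)
      qed
      then show ?thesis by (simp add: sum_subtractf)
    qed
    have R1: "(\<Sum>i<n. x i * (1 - w0 i)) = (\<Sum>i\<in>?G. x i)"
    proof -
      have "(\<Sum>i<n. x i * (1 - w0 i)) = (\<Sum>i<n. if i \<in> ?G then x i else 0)"
        using Good_iff unfolding w0_def by (intro sum.cong refl) auto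
      then show ?thesis using restr[OF _ Good_sub_n] by simp
    qed
    have sGx: "(\<Sum>i\<in>?G. x i) \<le> \<rho>' * real n"
    proof -
      have "(\<Sum>i\<in>?G. x i) \<le> (\<Sum>i<n. x i)" using Good_sub_n x01 by (intro sum_mono2) auto
      then show ?thesis using sx by simp
    qed
    have cG: "real (card ?G) = real n - cb" using card_GB[of l] unfolding cb_def by simp
    have gn0: "0 \<le> \<gamma> * real n" using gam0 by simp
    have cGz: "real (card ?G) \<ge> (1 - \<zeta>) * real n" using cG qz gn0 unfolding cb_def by (simp add: algebra_simps)
    have resG: "resolvable_on ?G (\<lambda>i j. (A i j - F i j) * (lt i * lt j))
             (10 * d * K^3) (0.5 * d * K * (\<gamma> + (real n - real (card ?G)) / real n))"
      using res Good_sub cGz by blast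
    have p6: "(10::real) powi (-6) = 1/10^6" by (simp add: power_int_def field_simps)
    have smallx: "(\<Sum>i\<in>?G. x i) \<le> 10 powi (-6) * real (card ?G)"
    proof -
      have "\<rho>' * real n \<le> \<zeta> * real n" using r2 nr by simp
      also have "\<dots> \<le> 1/10^8 * real n" using zeta_small nr by simp
      also have "\<dots> \<le> 1/10^6 * ((1 - \<zeta>) * real n)" using zeta_small nr by (simp add: field_simps)
      also have "\<dots> \<le> 1/10^6 * real (card ?G)" using cGz by simp
      finally show ?thesis using sGx p6 by simp
    qed
    have RS: "(\<Sum>i\<in>?G. \<Sum>j\<in>?G. X i j * x i) \<ge> 10 * d * K^3 * (\<Sum>i\<in>?G. x i) - 0.5 * d * K * (\<gamma> + (real n - real (card ?G)) / real n) * real (card ?G)"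
      using resG smallx x01 Good_sub_n unfolding resolvable_on_def X_def by blast
    have slack: "(\<gamma> + (real n - real (card ?G)) / real n) * real (card ?G) \<le> K * \<rho>' * real n"
    proof -
      have cGn: "real (card ?G) \<le> real n" using cG cb0 by simp
      have "(\<gamma> + (real n - real (card ?G)) / real n) * real (card ?G) = \<gamma> * real (card ?G) + (real n - real (card ?G)) * (real (card ?G) / real n)"
        by (simp add: algebra_simps)
      also have "\<dots> \<le> \<gamma> * real n + (real n - real (card ?G)) * 1"
        using gam0 cGn nr by (intro add_mono mult_left_mono mult_mono) (auto simp: field_simps)
      also have "\<dots> = \<rho>0 * real n" using r0n cG by simp
      finally show ?thesis using r0K by simp
    qed
    have N'0: "\<forall>i<n. \<forall>j<n. 0 \<le> N' i j" using pN unfolding pseudorect_def by auto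
    have XNb: "\<bar>\<Sum>i\<in>?G. \<Sum>j\<in>?G. X i j * N' i j\<bar> \<le> K * d * trace_norm n N' + c * (\<Sum>i\<in>?G. \<Sum>j\<in>?G. N' i j)"
      by (rule XN[OF Good_sub Good_sub N'0])
    have tnN: "trace_norm n N' \<le> sqrt K * \<rho>' * real n" using pN sq unfolding pseudorect_def by simp
    have sN: "(\<Sum>i\<in>?G. \<Sum>j\<in>?G. N' i j) \<le> K * \<rho>'^2 * (real n)^2"
    proof -
      have "(\<Sum>i\<in>?G. \<Sum>j\<in>?G. N' i j) = (\<Sum>i<n. \<Sum>j<n. if i \<in> ?G \<and> j \<in> ?G then N' i j else 0)"
        by (rule restr2[OF Good_sub_n Good_sub_n, symmetric])
      also have "\<dots> \<le> (\<Sum>i<n. \<Sum>j<n. \<bar>N' i j\<bar>)" by (intro sum_mono) auto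
      also have "\<dots> \<le> (sqrt (\<rho>' * (K * \<rho>')))^2 * (real n)^2" using pN unfolding pseudorect_def by (elim conjE) assumption
      also have "\<dots> = K * \<rho>'^2 * (real n)^2" unfolding sq using Kpos by (simp add: power_mult_distrib)
      finally show ?thesis .
    qed
    have cN: "c * (K * \<rho>'^2 * (real n)^2) \<le> K^2 * d * \<rho>' * real n"
    proof -
      have "c * (K * \<rho>'^2 * (real n)^2) = K^2 * d * \<rho>' * real n * (\<rho>' / \<zeta>)"
        unfolding c_def using zeta_pos nr by (simp add: field_simps power2_eq_square)
      also have "\<dots> \<le> K^2 * d * \<rho>' * real n * 1"
        using r2 zeta_pos rp0 d_pos nr by (intro mult_left_mono) auto
      finally show ?thesis by simp
    qed
    have T1: "K * d * trace_norm n N' \<le> K * d * (K * \<rho>' * real n)"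
    proof -
      have "trace_norm n N' \<le> K * \<rho>' * real n"
        using tnN sK rp0 nr by (meson mult_right_mono order_trans zero_le_mult_iff of_nat_0_le_iff)
      then show ?thesis using Kd_pos by (intro mult_left_mono) auto
    qed
    have cpos: "0 \<le> c" using c_pos by simp
    have T2: "c * (\<Sum>i\<in>?G. \<Sum>j\<in>?G. N' i j) \<le> c * (K * \<rho>'^2 * (real n)^2)"
      using sN cpos by (intro mult_left_mono) auto
    have sl2: "0.5 * d * K * (\<gamma> + (real n - real (card ?G)) / real n) * real (card ?G) \<le> 0.5 * d * K * (K * \<rho>' * real n)"
      using slack d_pos Kpos mult_left_mono[OF slack, of "0.5 * d * K"] by (simp add: mult.assoc)
    have "(\<Sum>i<n. \<Sum>j<n. A i j * (l i * l j) * W0 i j * M i j)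
        \<ge> 10 * d * K^3 * (\<Sum>i\<in>?G. x i) - 0.5 * d * K * (K * \<rho>' * real n) - K * d * (K * \<rho>' * real n) - K^2 * d * \<rho>' * real n"
      using L1 L2 L3 RS abs_le_D1[OF XNb] T1 T2 cN sl2 by linarith
    moreover have "10 * d * K^3 * (\<Sum>i\<in>?G. x i) - 0.5 * d * K * (K * \<rho>' * real n) - K * d * (K * \<rho>' * real n) - K^2 * d * \<rho>' * real n
        \<ge> 10 * d * K^2 * (K * (\<Sum>i\<in>?G. x i) - \<rho>' * real n)"
    proof -
      have "0 \<le> d * K^2 * \<rho>' * real n" using d_pos rp0 by simp
      then show ?thesis by (simp add: power2_eq_square power3_eq_cube algebra_simps)
    qed
    ultimately show "(\<Sum>i<n. \<Sum>j<n. A i j * (l i * l j) * W0 i j * M i j) \<ge> 10 * d * K^2 * (K * (\<Sum>i<n. x i * (1 - w0 i)) - \<rho>' * real n)"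
      unfolding R1 by linarith
  qed
  then have "\<rho> \<le> \<rho>0" using opt unfolding boost_optimal_def by blast
  then have "\<rho> * real n \<le> \<rho>0 * real n" using nr by simp
  then show ?thesis using r0n unfolding cb_def by simp
qed

end

context bs begin

definition Rset where "Rset l w = {i \<in> S. l i \<noteq> lt i \<and> w i < 1 - 1 / sqrt K}"

lemma Rset_sub_Bad: "Rset l w \<subseteq> Bad l" unfolding Rset_def Bad_def using Ssub by auto
lemma Rset_sub: "Rset l w \<subseteq> S" unfolding Rset_def by auto
lemma Rset_Good: "Rset l w \<inter> Good l = {}" unfolding Rset_def Good_def by auto

lemma sqrtK: "100 \<le> sqrt K"
proof -
  have "sqrt (10^4) \<le> sqrt K" using real_sqrt_le_mono[OF K_big] .
  moreover have "sqrt ((10::real)^4) = 100"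
  proof -
    have "(10::real)^4 = 100^2" by simp
    then show ?thesis by simp
  qed
  ultimately show ?thesis by simp
qed

lemma step2:
  assumes labl: "is_labelling n l"
    and feas: "boost_feasible n A l \<zeta> d K \<rho> w W N"
    and qz: "real (card (Bad l)) + \<gamma> * real n \<le> \<zeta> * real n"
    and rq: "\<rho> * real n \<le> real (card (Bad l)) + \<gamma> * real n"
  shows "real (card (Rset l w)) \<le> 0.006 * (real (card (Bad l)) + \<gamma> * real n)"
proof -
  let ?B = "Bad l" and ?G = "Good l" and ?R = "Rset l w"
  define cb where "cb = real (card ?B)"
  define q where "q = cb + \<gamma> * real n"
  define r where "r = real (card ?R)"
  have nr: "0 < real n" using npos by simp
  have Kpos: "0 < K" using K_big by simp
  have gn0: "0 \<le> \<gamma> * real n" using gam0 by simp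
  have cb0: "0 \<le> cb" unfolding cb_def by simp
  have fR: "finite ?R" using finite_subset[OF Rset_sub finS] .
  have rcb: "r \<le> cb" unfolding r_def cb_def using card_mono[OF finite_subset[OF Bad_sub] Rset_sub_Bad] by simp
  have r0: "0 \<le> r" unfolding r_def by simp
  have cbq: "cb \<le> q" unfolding q_def using gn0 by simp
  have qzn: "q \<le> \<zeta> * real n" using qz unfolding q_def cb_def .
  have R_n: "?R \<subseteq> {..<n}" using Rset_sub Ssub by auto
  from feas have rho0: "0 \<le> \<rho>" and rhoz: "\<rho> \<le> \<zeta>" and pN: "pseudorect n \<rho> N"
    and w01: "\<forall>i<n. 0 \<le> w i \<and> w i \<le> 1" and sw: "(\<Sum>i<n. w i) \<le> \<rho> * real n"
    and WW: "\<forall>i<n. \<forall>j<n. 0 \<le> W i j \<and> W i j = 1 - w i - w j + N i j"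
    and cons: "\<forall>\<rho>' M x. \<rho> / K \<le> \<rho>' \<and> \<rho>' \<le> \<zeta> \<and> row_selector n \<rho>' (K * \<rho>') M x \<longrightarrow>
        (\<Sum>i<n. \<Sum>j<n. A i j * (l i * l j) * W i j * M i j) \<ge> 10 * d * K^2 * (K * (\<Sum>i<n. x i * (1 - w i)) - \<rho>' * real n)"
    unfolding boost_feasible_def by blast+
  define \<rho>' where "\<rho>' = max \<rho> (cb / real n)"
  have rp0: "0 \<le> \<rho>'" unfolding \<rho>'_def using rho0 by simp
  have rpn: "\<rho>' * real n \<le> q"
  proof -
    have "cb / real n * real n = cb" using nr by simp
    then show ?thesis unfolding \<rho>'_def q_def using rq cbq nr unfolding cb_def q_def
      by (auto simp: max_def)
  qed
  have cbrp: "cb \<le> \<rho>' * real n"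
  proof -
    have "cb / real n \<le> \<rho>'" unfolding \<rho>'_def by simp
    then show ?thesis using nr by (simp add: field_simps)
  qed
  have rpz: "\<rho>' \<le> \<zeta>"
  proof -
    have "cb / real n \<le> \<zeta>" using qzn cbq nr by (simp add: field_simps)
    then show ?thesis unfolding \<rho>'_def using rhoz by simp
  qed
  have rhoK: "\<rho> / K \<le> \<rho>'"
  proof -
    have "\<rho> * 1 \<le> \<rho> * K" using mult_left_mono[of 1 K \<rho>] rho0 K_big by simp
    then have "\<rho> / K \<le> \<rho>" using Kpos by (simp add: divide_le_eq)
    then show ?thesis unfolding \<rho>'_def by simp
  qed
  define x where "x i = (if i \<in> ?R then 1 else (0::real))" for i
  define Ns where "Ns i j = (if i \<in> ?R \<and> j \<in> ?B then 1 else (0::real))" for i j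
  define M where "M i j = x i - Ns i j" for i j
  have s1: "1 \<le> sqrt K" using sqrtK by linarith
  have sq: "sqrt (\<rho>' * (K * \<rho>')) = sqrt K * \<rho>'"
    using rp0 Kpos by (simp add: real_sqrt_mult mult_ac)
  have rsel: "row_selector n \<rho>' (K * \<rho>') M x"
    unfolding row_selector_def
  proof (intro conjI allI impI exI)
    show "0 \<le> M i j" "M i j \<le> 1" for i j unfolding M_def x_def Ns_def by auto
    show "0 \<le> x i" "x i \<le> 1" for i unfolding x_def by auto
    have "(\<Sum>i<n. x i) = r" unfolding x_def r_def using restr[of "{..<n}" ?R "\<lambda>_. 1"] R_n by simp
    then show "(\<Sum>i<n. x i) \<le> \<rho>' * real n" using rcb cbrp by simp
    show "pseudorect n (sqrt (\<rho>' * (K * \<rho>'))) Ns"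
      unfolding pseudorect_def
    proof (intro conjI allI impI)
      show "0 \<le> Ns i j" "Ns i j \<le> 1" for i j unfolding Ns_def by auto
      have "(\<Sum>i<n. \<Sum>j<n. \<bar>Ns i j\<bar>) = r * cb" unfolding Ns_def r_def cb_def by (rule card_rect[OF R_n Bad_sub])
      also have "\<dots> \<le> (\<rho>' * real n) * (\<rho>' * real n)" using rcb cbrp r0 cb0 by (intro mult_mono) auto
      also have "\<dots> \<le> (sqrt (\<rho>' * (K * \<rho>')))^2 * (real n)^2"
      proof -
        have "0 \<le> (\<rho>' * real n) * (\<rho>' * real n)" by simp
        then have "(\<rho>' * real n) * (\<rho>' * real n) * 1 \<le> (\<rho>' * real n) * (\<rho>' * real n) * K"
          using K_big by (intro mult_left_mono) auto
        then show ?thesis unfolding sq using Kpos by (simp add: power2_eq_square mult_ac)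
      qed
      finally show "(\<Sum>i<n. \<Sum>j<n. \<bar>Ns i j\<bar>) \<le> (sqrt (\<rho>' * (K * \<rho>')))^2 * (real n)^2" .
      have "trace_norm n Ns \<le> sqrt r * sqrt cb" unfolding Ns_def r_def cb_def by (rule trace_norm_rect[OF R_n Bad_sub])
      also have "\<dots> \<le> sqrt cb * sqrt cb" using rcb cb0 by (intro mult_right_mono) auto
      also have "\<dots> = cb" using cb0 by simp
      also have "\<dots> \<le> \<rho>' * real n" by (rule cbrp)
      also have "\<dots> \<le> sqrt K * \<rho>' * real n"
        using mult_right_mono[OF s1, of "\<rho>' * real n"] rp0 by (simp add: mult.assoc)
      finally show "trace_norm n Ns \<le> sqrt (\<rho>' * (K * \<rho>')) * real n" unfolding sq .
    qed
    show "M i j = x i - Ns i j" for i j unfolding M_def ..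
  qed
  have C: "(\<Sum>i<n. \<Sum>j<n. A i j * (l i * l j) * W i j * M i j) \<ge> 10 * d * K^2 * (K * (\<Sum>i<n. x i * (1 - w i)) - \<rho>' * real n)"
    using cons rhoK rpz rsel by blast
  define a where "a = (\<Sum>i\<in>?R. 1 - w i)"
  have xa: "(\<Sum>i<n. x i * (1 - w i)) = a"
  proof -
    have "(\<Sum>i<n. x i * (1 - w i)) = (\<Sum>i<n. if i \<in> ?R then 1 - w i else 0)" unfolding x_def by (intro sum.cong) auto
    then show ?thesis unfolding a_def using restr[OF _ R_n] by simp
  qed
  have Mform: "M i j = (if i \<in> ?R \<and> j \<in> ?G then 1 else 0)" if "i < n" "j < n" for i j
    using Good_iff[OF that(2), of l] unfolding M_def x_def Ns_def by auto
  have sgn: "l i * l j = - (lt i * lt j)" if "i \<in> ?R" "j \<in> ?G" for i j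
  proof -
    have "i < n" "j < n" using that R_n Good_sub_n[of l] by auto
    then have "l i = 1 \<or> l i = -1" "lt i = 1 \<or> lt i = -1" using labl lab unfolding is_labelling_def by auto
    moreover have "l i \<noteq> lt i" "l j = lt j" using that unfolding Rset_def Good_def by auto
    ultimately have "l i = - lt i" by auto
    then show ?thesis using \<open>l j = lt j\<close> by simp
  qed
  have LHS1: "(\<Sum>i<n. \<Sum>j<n. A i j * (l i * l j) * W i j * M i j) = - (\<Sum>i\<in>?R. \<Sum>j\<in>?G. A i j * (lt i * lt j) * W i j)"
  proof -
    have "(\<Sum>i<n. \<Sum>j<n. A i j * (l i * l j) * W i j * M i j) =
          (\<Sum>i<n. \<Sum>j<n. if i \<in> ?R \<and> j \<in> ?G then - (A i j * (lt i * lt j) * W i j) else 0)"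
      using Mform sgn by (intro sum.cong refl) auto
    also have "\<dots> = (\<Sum>i\<in>?R. \<Sum>j\<in>?G. - (A i j * (lt i * lt j) * W i j))" by (rule restr2[OF R_n Good_sub_n[of l]])
    finally show ?thesis by (simp add: sum_negf)
  qed
  have LHS2: "(\<Sum>i\<in>?R. \<Sum>j\<in>?G. X i j * W i j) \<le> (\<Sum>i\<in>?R. \<Sum>j\<in>?G. A i j * (lt i * lt j) * W i j)"
  proof (intro sum_mono)
    fix i j assume ij: "i \<in> ?R" "j \<in> ?G"
    then have "i \<in> S" "j \<in> S" "i < n" "j < n" using Rset_sub[of l w] Good_sub[of l] R_n Good_sub_n[of l] by auto
    then have "0 \<le> F i j * (lt i * lt j)" "0 \<le> W i j" using Fpos WW by blast+
    then have "0 \<le> F i j * (lt i * lt j) * W i j" by simp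
    then show "X i j * W i j \<le> A i j * (lt i * lt j) * W i j" unfolding X_def by (simp add: algebra_simps)
  qed
  have Wsplit: "(\<Sum>i\<in>?R. \<Sum>j\<in>?G. X i j * W i j) =
     (\<Sum>i\<in>?R. \<Sum>j\<in>?G. (1 - w i) * X i j * 1) - (\<Sum>i\<in>?R. \<Sum>j\<in>?G. 1 * X i j * w j) + (\<Sum>i\<in>?R. \<Sum>j\<in>?G. X i j * N i j)"
  proof -
    have "(\<Sum>i\<in>?R. \<Sum>j\<in>?G. X i j * W i j) = (\<Sum>i\<in>?R. \<Sum>j\<in>?G. (1 - w i) * X i j * 1 - 1 * X i j * w j + X i j * N i j)"
    proof (intro sum.cong refl)
      fix i j assume "i \<in> ?R" "j \<in> ?G"
      then have "i < n" "j < n" using R_n Good_sub_n[of l] by auto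
      then have "W i j = 1 - w i - w j + N i j" using WW by auto
      then show "X i j * W i j = (1 - w i) * X i j * 1 - 1 * X i j * w j + X i j * N i j" by (simp add: ring_distribs)
    qed
    then show ?thesis by (simp add: sum.distrib sum_subtractf)
  qed
  define T where "T = ?G \<union> ?R"
  have TS: "T \<subseteq> S" unfolding T_def using Good_sub[of l] Rset_sub by auto
  have fG: "finite ?G" using finite_subset[OF Good_sub[of l] finS] .
  have fT: "finite T" using finite_subset[OF TS finS] .
  have cT: "real (card T) = real (card ?G) + r" unfolding T_def r_def
    using card_Un_disjoint[OF fG fR] Rset_Good by (simp add: Int_commute)
  have cG: "real (card ?G) = real n - cb" using card_GB[of l] unfolding cb_def by simp
  have cTn: "real (card T) \<le> real n" using card_mono[OF _ TS] cS by (simp add: finS)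
  have cTz: "real (card T) \<ge> (1 - \<zeta>) * real n" using cT cG qzn cbq r0 by (simp add: algebra_simps)
  have resT: "resolvable_on T (\<lambda>i j. (A i j - F i j) * (lt i * lt j))
             (10 * d * K^3) (0.5 * d * K * (\<gamma> + (real n - real (card T)) / real n))"
    using res TS cTz by blast
  define xr where "xr i = (if i \<in> ?R then 1 - w i else 0)" for i
  have xr01: "\<forall>i\<in>T. 0 \<le> xr i \<and> xr i \<le> 1" using w01 R_n unfolding xr_def by auto
  have sxr: "(\<Sum>i\<in>T. xr i) = a" unfolding xr_def a_def using restr[OF fT, of ?R] T_def by auto
  have ar: "a \<le> r"
  proof -
    have "a \<le> (\<Sum>i\<in>?R. 1)" unfolding a_def using w01 R_n by (intro sum_mono) auto
    then show ?thesis unfolding r_def by simp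
  qed
  have a0: "0 \<le> a" unfolding a_def using w01 R_n by (intro sum_nonneg) auto
  have p6: "(10::real) powi (-6) = 1/10^6" by (simp add: power_int_def field_simps)
  have smallx: "(\<Sum>i\<in>T. xr i) \<le> 10 powi (-6) * real (card T)"
  proof -
    have "a \<le> \<zeta> * real n" using ar rcb cbq qzn by simp
    also have "\<dots> \<le> 1/10^8 * real n" using zeta_small nr by simp
    also have "\<dots> \<le> 1/10^6 * ((1 - \<zeta>) * real n)" using zeta_small nr by (simp add: field_simps)
    also have "\<dots> \<le> 1/10^6 * real (card T)" using cTz by simp
    finally show ?thesis using sxr p6 by simp
  qed
  have RS: "(\<Sum>i\<in>T. \<Sum>j\<in>T. X i j * xr i) \<ge> 10 * d * K^3 * (\<Sum>i\<in>T. xr i) - 0.5 * d * K * (\<gamma> + (real n - real (card T)) / real n) * real (card T)"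
    using resT smallx xr01 unfolding resolvable_on_def X_def by blast
  have RSsplit: "(\<Sum>i\<in>T. \<Sum>j\<in>T. X i j * xr i) = (\<Sum>i\<in>?R. \<Sum>j\<in>?G. (1 - w i) * X i j * 1) + (\<Sum>i\<in>?R. \<Sum>j\<in>?R. (1 - w i) * X i j * 1)"
  proof -
    have "(\<Sum>i\<in>T. \<Sum>j\<in>T. X i j * xr i) = (\<Sum>i\<in>T. if i \<in> ?R then (\<Sum>j\<in>T. (1 - w i) * X i j * 1) else 0)"
      unfolding xr_def by (intro sum.cong refl) (auto simp: mult_ac)
    also have "\<dots> = (\<Sum>i\<in>?R. \<Sum>j\<in>T. (1 - w i) * X i j * 1)" using restr[OF fT, of ?R] T_def by auto
    also have "\<dots> = (\<Sum>i\<in>?R. (\<Sum>j\<in>?G. (1 - w i) * X i j * 1) + (\<Sum>j\<in>?R. (1 - w i) * X i j * 1))"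
      unfolding T_def using fG fR Rset_Good by (intro sum.cong refl sum.union_disjoint) auto
    finally show ?thesis by (simp add: sum.distrib)
  qed
  have slack: "(\<gamma> + (real n - real (card T)) / real n) * real (card T) \<le> q"
  proof -
    have "(\<gamma> + (real n - real (card T)) / real n) * real (card T) = \<gamma> * real (card T) + (real n - real (card T)) * (real (card T) / real n)"
      by (simp add: algebra_simps)
    also have "\<dots> \<le> \<gamma> * real n + (real n - real (card T)) * 1"
      using gam0 cTn nr by (intro add_mono mult_left_mono mult_mono) (auto simp: field_simps)
    also have "\<dots> \<le> q" unfolding q_def using cT cG r0 by simp
    finally show ?thesis .
  qed
  have sl2: "0.5 * d * K * (\<gamma> + (real n - real (card T)) / real n) * real (card T) \<le> 0.5 * d * K * q"
    using mult_left_mono[OF slack, of "0.5 * d * K"] d_pos Kpos by (simp add: mult.assoc)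
  have cr: "c * r \<le> K * d"
  proof -
    have "r \<le> \<zeta> * real n" using rcb cbq qzn by simp
    then have "c * r \<le> c * (\<zeta> * real n)" using c_pos by (intro mult_left_mono) auto
    also have "\<dots> = K * d" unfolding c_def using zeta_pos nr by simp
    finally show ?thesis .
  qed
  have Kd0: "0 \<le> K * d" using Kd_pos by simp
  have E1: "\<bar>\<Sum>i\<in>?R. \<Sum>j\<in>?R. (1 - w i) * X i j * 1\<bar> \<le> 2 * K * d * q"
  proof -
    have h: "\<bar>\<Sum>i\<in>?R. \<Sum>j\<in>?R. (1 - w i) * X i j * 1\<bar> \<le> K * d * sqrt (\<Sum>i\<in>?R. (1 - w i)^2) * sqrt (\<Sum>j\<in>?R. 1^2) + c * (\<Sum>i\<in>?R. \<bar>1 - w i\<bar>) * (\<Sum>j\<in>?R. \<bar>1::real\<bar>)"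
      by (rule XG[OF Rset_sub Rset_sub])
    have s1: "(\<Sum>i\<in>?R. (1 - w i)^2) \<le> r"
    proof -
      have "(\<Sum>i\<in>?R. (1 - w i)^2) \<le> (\<Sum>i\<in>?R. 1)" using w01 R_n by (intro sum_mono) (auto simp: power_le_one)
      then show ?thesis unfolding r_def by simp
    qed
    have s2: "(\<Sum>i\<in>?R. \<bar>1 - w i\<bar>) \<le> r"
    proof -
      have "(\<Sum>i\<in>?R. \<bar>1 - w i\<bar>) \<le> (\<Sum>i\<in>?R. 1)" using w01 R_n by (intro sum_mono) auto
      then show ?thesis unfolding r_def by simp
    qed
    have e1: "(\<Sum>j\<in>?R. (1::real)^2) = r" unfolding r_def by simp
    have "sqrt (\<Sum>i\<in>?R. (1 - w i)^2) \<le> sqrt r" using s1 by simp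
    then have "K * d * sqrt (\<Sum>i\<in>?R. (1 - w i)^2) \<le> K * d * sqrt r" using Kd0 by (rule mult_left_mono)
    then have "K * d * sqrt (\<Sum>i\<in>?R. (1 - w i)^2) * sqrt (\<Sum>j\<in>?R. 1^2) \<le> K * d * sqrt r * sqrt r"
      unfolding e1 by (rule mult_right_mono) (simp add: r0)
    also have "\<dots> = K * d * r" using r0 by (simp add: mult.assoc)
    finally have t1: "K * d * sqrt (\<Sum>i\<in>?R. (1 - w i)^2) * sqrt (\<Sum>j\<in>?R. 1^2) \<le> K * d * r" .
    have "c * (\<Sum>i\<in>?R. \<bar>1 - w i\<bar>) * (\<Sum>j\<in>?R. \<bar>1::real\<bar>) \<le> c * r * r"
      using s2 c_pos r0 by (simp add: r_def mult_right_mono mult_left_mono)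
    also have "\<dots> \<le> K * d * r" using cr r0 by (simp add: mult_right_mono)
    finally have t2: "c * (\<Sum>i\<in>?R. \<bar>1 - w i\<bar>) * (\<Sum>j\<in>?R. \<bar>1::real\<bar>) \<le> K * d * r" .
    have "K * d * r \<le> K * d * q" using rcb cbq Kd0 by (intro mult_left_mono) auto
    then show ?thesis using h t1 t2 by linarith
  qed
  have sGw: "(\<Sum>j\<in>?G. w j) \<le> q"
  proof -
    have "(\<Sum>j\<in>?G. w j) \<le> (\<Sum>j<n. w j)" using Good_sub_n[of l] w01 by (intro sum_mono2) auto
    then show ?thesis using sw rq unfolding q_def cb_def by simp
  qed
  have E2: "\<bar>\<Sum>i\<in>?R. \<Sum>j\<in>?G. 1 * X i j * w j\<bar> \<le> 2 * K * d * q"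
  proof -
    have h: "\<bar>\<Sum>i\<in>?R. \<Sum>j\<in>?G. 1 * X i j * w j\<bar> \<le> K * d * sqrt (\<Sum>i\<in>?R. 1^2) * sqrt (\<Sum>j\<in>?G. (w j)^2) + c * (\<Sum>i\<in>?R. \<bar>1::real\<bar>) * (\<Sum>j\<in>?G. \<bar>w j\<bar>)"
      by (rule XG[OF Rset_sub Good_sub[of l]])
    have s1: "(\<Sum>j\<in>?G. (w j)^2) \<le> q"
    proof -
      have "(\<Sum>j\<in>?G. (w j)^2) \<le> (\<Sum>j\<in>?G. w j)"
      proof (intro sum_mono)
        fix j assume "j \<in> ?G"
        then have "j < n" using Good_sub_n[of l] by auto
        then have "0 \<le> w j" "w j \<le> 1" using w01 by auto
        then show "(w j)^2 \<le> w j" by (simp add: power2_eq_square mult_left_le_one_le)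
      qed
      then show ?thesis using sGw by simp
    qed
    have s2: "(\<Sum>j\<in>?G. \<bar>w j\<bar>) \<le> q"
    proof -
      have "(\<Sum>j\<in>?G. \<bar>w j\<bar>) = (\<Sum>j\<in>?G. w j)" using w01 Good_sub_n[of l] by (intro sum.cong) auto
      then show ?thesis using sGw by simp
    qed
    have e1: "(\<Sum>j\<in>?R. (1::real)^2) = r" unfolding r_def by simp
    have "sqrt r \<le> sqrt q" using rcb cbq by simp
    moreover have "sqrt (\<Sum>j\<in>?G. (w j)^2) \<le> sqrt q" using s1 by simp
    ultimately have "sqrt r * sqrt (\<Sum>j\<in>?G. (w j)^2) \<le> sqrt q * sqrt q" using cb0 cbq by (intro mult_mono) (auto intro: sum_nonneg)
    then have "K * d * (sqrt r * sqrt (\<Sum>j\<in>?G. (w j)^2)) \<le> K * d * (sqrt q * sqrt q)"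
      using Kd0 by (rule mult_left_mono)
    then have "K * d * sqrt (\<Sum>i\<in>?R. 1^2) * sqrt (\<Sum>j\<in>?G. (w j)^2) \<le> K * d * sqrt q * sqrt q"
      unfolding e1 by (simp only: mult.assoc)
    also have "\<dots> = K * d * q" using cbq cb0 by (simp add: mult.assoc)
    finally have t1: "K * d * sqrt (\<Sum>i\<in>?R. 1^2) * sqrt (\<Sum>j\<in>?G. (w j)^2) \<le> K * d * q" .
    have "c * (\<Sum>i\<in>?R. \<bar>1::real\<bar>) * (\<Sum>j\<in>?G. \<bar>w j\<bar>) \<le> c * r * q"
      using s2 c_pos r0 by (simp add: r_def mult_left_mono)
    also have "\<dots> \<le> K * d * q" using cr cbq cb0 by (intro mult_right_mono) auto
    finally have t2: "c * (\<Sum>i\<in>?R. \<bar>1::real\<bar>) * (\<Sum>j\<in>?G. \<bar>w j\<bar>) \<le> K * d * q" .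
    show ?thesis using h t1 t2 by linarith
  qed
  have E3: "\<bar>\<Sum>i\<in>?R. \<Sum>j\<in>?G. X i j * N i j\<bar> \<le> 2 * K * d * q"
  proof -
    have N0: "\<forall>i<n. \<forall>j<n. 0 \<le> N i j" using pN unfolding pseudorect_def by auto
    have h: "\<bar>\<Sum>i\<in>?R. \<Sum>j\<in>?G. X i j * N i j\<bar> \<le> K * d * trace_norm n N + c * (\<Sum>i\<in>?R. \<Sum>j\<in>?G. N i j)"
      by (rule XN[OF Rset_sub Good_sub[of l] N0])
    have tn: "trace_norm n N \<le> q" using pN rq unfolding pseudorect_def q_def cb_def by simp
    have sN: "(\<Sum>i\<in>?R. \<Sum>j\<in>?G. N i j) \<le> \<rho>^2 * (real n)^2"
    proof -
      have "(\<Sum>i\<in>?R. \<Sum>j\<in>?G. N i j) = (\<Sum>i<n. \<Sum>j<n. if i \<in> ?R \<and> j \<in> ?G then N i j else 0)"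
        by (rule restr2[OF R_n Good_sub_n[of l], symmetric])
      also have "\<dots> \<le> (\<Sum>i<n. \<Sum>j<n. \<bar>N i j\<bar>)" by (intro sum_mono) auto
      also have "\<dots> \<le> \<rho>^2 * (real n)^2" using pN unfolding pseudorect_def by (elim conjE) assumption
      finally show ?thesis .
    qed
    have "c * (\<Sum>i\<in>?R. \<Sum>j\<in>?G. N i j) \<le> c * (\<rho>^2 * (real n)^2)" using sN c_pos by (intro mult_left_mono) auto
    also have "\<dots> = K * d * (\<rho> * real n) * (\<rho> / \<zeta>)" unfolding c_def using zeta_pos nr by (simp add: field_simps power2_eq_square)
    also have "\<dots> \<le> K * d * (\<rho> * real n) * 1"
      using rhoz zeta_pos rho0 Kd0 nr by (intro mult_left_mono) auto
    also have "\<dots> \<le> K * d * q" using rq Kd0 unfolding q_def cb_def by (simp add: mult_left_mono)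
    finally have t2: "c * (\<Sum>i\<in>?R. \<Sum>j\<in>?G. N i j) \<le> K * d * q" .
    have t1: "K * d * trace_norm n N \<le> K * d * q" using tn Kd0 by (intro mult_left_mono) auto
    show ?thesis using h t1 t2 by linarith
  qed
  have comb: "20 * d * K^3 * a \<le> 10 * d * K^2 * q + 6.5 * K * d * q"
  proof -
    have c1: "10 * d * K^2 * (K * a - \<rho>' * real n) \<le> - (\<Sum>i\<in>?R. \<Sum>j\<in>?G. X i j * W i j)"
      using C[unfolded xa] LHS1 LHS2 by linarith
    have c2: "10 * d * K^2 * (\<rho>' * real n) \<le> 10 * d * K^2 * q" using rpn d_pos by (intro mult_left_mono) auto
    have c3: "(\<Sum>i\<in>?R. \<Sum>j\<in>?G. X i j * W i j) \<ge> 10 * d * K^3 * a - 0.5 * d * K * q - 2 * K * d * q - 2 * K * d * q - 2 * K * d * q"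
      using Wsplit RS[unfolded sxr] RSsplit sl2 abs_le_D1[OF E1] abs_le_D1[OF E2] abs_le_D2[OF E3] by linarith
    have "10 * d * K^2 * (K * a - \<rho>' * real n) = 10 * d * K^3 * a - 10 * d * K^2 * (\<rho>' * real n)"
      by (simp add: algebra_simps power3_eq_cube power2_eq_square)
    moreover have "0.5 * d * K * q + 2 * K * d * q + 2 * K * d * q + 2 * K * d * q = 6.5 * K * d * q"
      by (simp add: algebra_simps)
    ultimately show ?thesis using c1 c2 c3 by linarith
  qed
  define s where "s = sqrt K"
  have spos: "100 \<le> s" unfolding s_def by (rule sqrtK)
  have Ks: "K = s^2" unfolding s_def using Kpos by simp
  have ar2: "r / s \<le> a"
  proof -
    have "(\<Sum>i\<in>?R. 1 / s) \<le> a" unfolding a_def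
    proof (intro sum_mono)
      fix i assume "i \<in> ?R"
      then have "w i < 1 - 1 / s" unfolding Rset_def s_def by auto
      then show "1 / s \<le> 1 - w i" by simp
    qed
    then show ?thesis unfolding r_def by simp
  qed
  have comb2: "20 * s^3 * r \<le> (10 * s^2 + 6.5) * q"
  proof -
    have "20 * d * K^3 * (r / s) \<le> 10 * d * K^2 * q + 6.5 * K * d * q"
      using comb ar2 d_pos Kpos by (smt (verit) mult_left_mono zero_le_mult_iff zero_less_power)
    then have "(d * s^2) * (20 * s^3 * r) \<le> (d * s^2) * ((10 * s^2 + 6.5) * q)"
      unfolding Ks using spos by (simp add: field_simps power_mult_distrib power2_eq_square power3_eq_cube)
    moreover have "0 < d * s^2" using d_pos spos by simp
    ultimately show ?thesis using mult_le_cancel_left_pos by blast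
  qed
  have q0: "0 \<le> q" using cbq cb0 by simp
  have "(10 * s^2 + 6.5) * q \<le> (0.12 * s^3) * q"
  proof (intro mult_right_mono q0)
    have ss: "100 * 100 \<le> s * s" using mult_mono[OF spos spos] spos by simp
    have "10 * s^2 + 6.5 \<le> 10 * s^2 + 2 * s^2" using ss by (simp add: power2_eq_square)
    also have "\<dots> = 0.12 * s^2 * 100" by simp
    also have "\<dots> \<le> 0.12 * s^2 * s" using spos by (intro mult_left_mono) auto
    finally show "10 * s^2 + 6.5 \<le> 0.12 * s^3" by (simp add: power2_eq_square power3_eq_cube mult_ac)
  qed
  with comb2 have "20 * s^3 * r \<le> 0.12 * s^3 * q" by linarith
  moreover have "0 < s^3" using spos by simp
  ultimately have "r \<le> 0.006 * q" by (simp add: field_simps)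
  then show ?thesis unfolding r_def q_def cb_def .
qed

end

lemma card_split_n: "card {i. i < n \<and> P i} + card {i. i < n \<and> \<not> P i} = (n::nat)"
proof -
  have "{i. i < n \<and> P i} \<union> {i. i < n \<and> \<not> P i} = {..<n}" by auto
  moreover have "{i. i < n \<and> P i} \<inter> {i. i < n \<and> \<not> P i} = {}" by auto
  ultimately show ?thesis using card_Un_disjoint[of "{i. i < n \<and> P i}" "{i. i < n \<and> \<not> P i}"] by simp
qed

context bs begin

definition Err where "Err l = {i. i < n \<and> l i \<noteq> lt i}"

lemma finErr: "finite (Err l)" unfolding Err_def by simp

lemma round:
  assumes labl: "is_labelling n l"
    and inv: "real (card (Err l)) \<le> 0.8 * \<zeta> * real n"
    and st: "boost_step n A \<zeta> d K l l'"
  shows "is_labelling n l' \<and> real (card (Err l')) \<le> real (card (Err l)) / 40 + 4 * \<gamma> * real n"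
proof -
  obtain \<rho> w W N where opt: "boost_optimal n A l \<zeta> d K \<rho> w W N"
    and l'd: "\<forall>i<n. l' i = (if w i \<ge> 1 - 1 / sqrt K then - l i else l i)"
    using st unfolding boost_step_def by blast
  have feas: "boost_feasible n A l \<zeta> d K \<rho> w W N" using opt unfolding boost_optimal_def by blast
  have lab': "is_labelling n l'" using labl l'd unfolding is_labelling_def by auto
  let ?E = "Err l" and ?B = "Bad l" and ?R = "Rset l w"
  define Fl where "Fl = {i. i < n \<and> w i \<ge> 1 - 1 / sqrt K}"
  define Sc where "Sc = {..<n} - S"
  have nr: "0 < real n" using npos by simp
  have gn0: "0 \<le> \<gamma> * real n" using gam0 by simp
  have fSc: "finite Sc" unfolding Sc_def by simp
  have fFl: "finite Fl" unfolding Fl_def by simp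
  have fR: "finite ?R" using finite_subset[OF Rset_sub finS] .
  have cSc: "real (card Sc) \<le> \<gamma> * real n"
  proof -
    have "card Sc = n - card S" unfolding Sc_def using card_Diff_subset[OF finS Ssub] by simp
    then have "real (card Sc) = real n - real (card S)" using card_mono[OF _ Ssub] by simp
    then show ?thesis using nS_le by simp
  qed
  have Bsplit: "real (card ?B) = real (card (?E \<inter> S)) + real (card Sc)"
  proof -
    have "?B = (?E \<inter> S) \<union> Sc" unfolding Bad_def Err_def Sc_def using Ssub by auto
    moreover have "(?E \<inter> S) \<inter> Sc = {}" unfolding Sc_def by auto
    ultimately show ?thesis using card_Un_disjoint[of "?E \<inter> S" Sc] finErr[of l] fSc by simp
  qed
  have Esplit: "real (card ?E) = real (card (?E \<inter> S)) + real (card (?E - S))"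
    using card_Int_Diff[OF finErr[of l], of S] by simp
  have ESc: "real (card (?E - S)) \<le> real (card Sc)"
  proof -
    have "?E - S \<subseteq> Sc" unfolding Err_def Sc_def by auto
    then show ?thesis using card_mono[OF fSc] by simp
  qed
  define q where "q = real (card ?B) + \<gamma> * real n"
  have qz: "real (card ?B) + \<gamma> * real n \<le> \<zeta> * real n"
  proof -
    have "real (card ?B) \<le> real (card ?E) + \<gamma> * real n" using Bsplit Esplit cSc by simp
    moreover have "\<gamma> * real n \<le> 0.1 * \<zeta> * real n" using gam nr by (intro mult_right_mono) auto
    ultimately show ?thesis using inv by linarith
  qed
  have rq: "\<rho> * real n \<le> real (card ?B) + \<gamma> * real n" by (rule step1[OF labl qz opt])
  have Rb: "real (card ?R) \<le> 0.006 * q" unfolding q_def by (rule step2[OF labl feas qz rq])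
  from feas have w01: "\<forall>i<n. 0 \<le> w i \<and> w i \<le> 1" and sw: "(\<Sum>i<n. w i) \<le> \<rho> * real n"
    unfolding boost_feasible_def by blast+
  have s100: "100 \<le> sqrt K" by (rule sqrtK)
  have thr: "0.99 \<le> 1 - 1 / sqrt K"
  proof -
    have "1 / sqrt K \<le> 1 / 100" using s100 K_big by (intro divide_left_mono) auto
    then show ?thesis by simp
  qed
  have Flb: "0.99 * real (card Fl) \<le> q"
  proof -
    have "0.99 * real (card Fl) = (\<Sum>i\<in>Fl. 0.99)" by simp
    also have "\<dots> \<le> (\<Sum>i\<in>Fl. w i)" unfolding Fl_def using thr by (intro sum_mono) auto
    also have "\<dots> \<le> (\<Sum>i<n. w i)" unfolding Fl_def using w01 by (intro sum_mono2) auto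
    also have "\<dots> \<le> q" using sw rq unfolding q_def by simp
    finally show ?thesis .
  qed
  have E'sub: "Err l' \<subseteq> (Fl - ?E) \<union> (?E - Fl)"
  proof
    fix i assume "i \<in> Err l'"
    then have i: "i < n" "l' i \<noteq> lt i" unfolding Err_def by auto
    have "l i = 1 \<or> l i = -1" "lt i = 1 \<or> lt i = -1" using labl lab i unfolding is_labelling_def by auto
    then show "i \<in> (Fl - ?E) \<union> (?E - Fl)" using i l'd unfolding Fl_def Err_def by (auto split: if_splits)
  qed
  have c1: "card (Err l') \<le> card (Fl - ?E) + card (?E - Fl)"
  proof -
    have "card (Err l') \<le> card ((Fl - ?E) \<union> (?E - Fl))" using card_mono[OF _ E'sub] fFl finErr[of l] by simp
    also have "\<dots> \<le> card (Fl - ?E) + card (?E - Fl)" by (rule card_Un_le)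
    finally show ?thesis .
  qed
  have c2: "card (Fl - ?E) + card (Fl \<inter> ?E) = card Fl"
    using card_Int_Diff[OF fFl, of ?E] by simp
  have c3: "card (?E \<inter> S) \<le> card (Fl \<inter> ?E) + card ?R"
  proof -
    have "?E \<inter> S \<subseteq> (Fl \<inter> ?E) \<union> ?R" unfolding Err_def Fl_def Rset_def by auto
    then have "card (?E \<inter> S) \<le> card ((Fl \<inter> ?E) \<union> ?R)" using card_mono fFl fR by (meson finite_Int finite_UnI)
    also have "\<dots> \<le> card (Fl \<inter> ?E) + card ?R" by (rule card_Un_le)
    finally show ?thesis .
  qed
  have c4: "card (?E - Fl) \<le> card ?R + card (?E - S)"
  proof -
    have "?E - Fl \<subseteq> ?R \<union> (?E - S)" unfolding Err_def Fl_def Rset_def by auto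
    then have "card (?E - Fl) \<le> card (?R \<union> (?E - S))" using card_mono fR finErr[of l] by (meson finite_Diff finite_UnI)
    also have "\<dots> \<le> card ?R + card (?E - S)" by (rule card_Un_le)
    finally show ?thesis .
  qed
  have "real (card (Err l')) \<le> real (card (?E \<inter> S)) / 40 + real (card (?E - S)) / 40 + 4 * \<gamma> * real n"
  proof -
    have r1: "real (card (Err l')) \<le> real (card Fl) - real (card (?E \<inter> S)) + 2 * real (card ?R) + real (card (?E - S))"
      using c1 c2 c3 c4 by linarith
    have r2: "99 * real (card Fl) \<le> 100 * q" using Flb by simp
    have qq: "q = real (card (?E \<inter> S)) + real (card Sc) + \<gamma> * real n" unfolding q_def using Bsplit by simp
    have e0: "0 \<le> real (card (?E - S))" by simp
    have es0: "0 \<le> real (card (?E \<inter> S))" by simp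
    have Rb': "1000 * real (card ?R) \<le> 6 * q" using Rb by simp
    show ?thesis using r1 r2 Rb' qq cSc ESc e0 gn0 es0 by linarith
  qed
  moreover have "real (card (?E \<inter> S)) / 40 + real (card (?E - S)) / 40 = real (card ?E) / 40"
    using Esplit by (simp add: add_divide_distrib)
  ultimately show ?thesis using lab' by linarith
qed

end

context bs begin

lemma iterate:
  assumes l0: "is_labelling n (seq 0)"
    and e0: "real (card (Err (seq 0))) \<le> 0.1 * \<zeta> * real n"
    and steps: "\<forall>t < T. boost_step n A \<zeta> d K (seq t) (seq (Suc t))"
  shows "t \<le> T \<Longrightarrow> is_labelling n (seq t) \<and>
     real (card (Err (seq t))) \<le> (1/40)^t * real (card (Err (seq 0))) + 160/39 * \<gamma> * real n \<and>
     real (card (Err (seq t))) \<le> 0.8 * \<zeta> * real n"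
proof (induction t)
  case 0
  have "0 \<le> \<gamma> * real n" using gam0 by simp
  moreover have "0.1 * \<zeta> * real n \<le> 0.8 * \<zeta> * real n" using zeta_pos by simp
  ultimately show ?case using l0 e0 by simp
next
  case (Suc t)
  then have tT: "t < T" by simp
  from Suc.IH tT have lt': "is_labelling n (seq t)"
    and et: "real (card (Err (seq t))) \<le> (1/40)^t * real (card (Err (seq 0))) + 160/39 * \<gamma> * real n"
    and et8: "real (card (Err (seq t))) \<le> 0.8 * \<zeta> * real n" by auto
  have r: "is_labelling n (seq (Suc t)) \<and> real (card (Err (seq (Suc t)))) \<le> real (card (Err (seq t))) / 40 + 4 * \<gamma> * real n"
    using round[OF lt' et8] steps tT by blast
  have g1: "\<gamma> * real n \<le> 0.1 * \<zeta> * real n" using gam by (intro mult_right_mono) auto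
  have "real (card (Err (seq t))) / 40 \<le> ((1/40)^t * real (card (Err (seq 0))) + 160/39 * \<gamma> * real n) / 40"
    using et by (intro divide_right_mono) auto
  also have "\<dots> = (1/40)^(Suc t) * real (card (Err (seq 0))) + 4/39 * \<gamma> * real n" by (simp add: field_simps)
  finally have a: "real (card (Err (seq t))) / 40 \<le> (1/40)^(Suc t) * real (card (Err (seq 0))) + 4/39 * \<gamma> * real n" .
  show ?case using r a et8 g1 by auto
qed

end

lemma main_pos:
  fixes n :: nat and A F :: "nat \<Rightarrow> nat \<Rightarrow> real"
    and \<zeta> d K \<gamma> :: real and S :: "nat set"
    and linit lt lout :: "nat \<Rightarrow> real"
  assumes bsa: "bs n A F Y Z \<zeta> d K \<gamma> S lt"
    and "is_labelling n linit"
    and "real (agreements n linit lt) \<ge> (1 - 0.1 * \<zeta>) * real n"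
    and "boosting_output n A \<zeta> d K linit lout"
  shows "real (agreements n lout lt) \<ge> (1 - 8 * \<gamma>) * real n"
proof -
  interpret bs n A F Y Z \<zeta> d K \<gamma> S lt by (rule bsa)
  obtain seq where s0: "\<forall>i<n. seq 0 i = linit i"
    and steps: "\<forall>t < nat \<lceil>10 * ln (real n)\<rceil>. boost_step n A \<zeta> d K (seq t) (seq (Suc t))"
    and sT: "\<forall>i<n. lout i = seq (nat \<lceil>10 * ln (real n)\<rceil>) i"
    using assms(4) unfolding boosting_output_def by blast
  define T where "T = nat \<lceil>10 * ln (real n)\<rceil>"
  have nr: "0 < real n" using npos by simp
  have l0: "is_labelling n (seq 0)" using assms(2) s0 unfolding is_labelling_def by auto
  have E0: "Err (seq 0) = {i. i < n \<and> \<not> linit i = lt i}" unfolding Err_def using s0 by auto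
  have ag0: "real (agreements n linit lt) + real (card (Err (seq 0))) = real n"
    unfolding agreements_def E0 using card_split_n[of n "\<lambda>i. linit i = lt i"] by (simp flip: of_nat_add)
  have e0: "real (card (Err (seq 0))) \<le> 0.1 * \<zeta> * real n" using ag0 assms(3) by (simp add: algebra_simps)
  have it: "real (card (Err (seq T))) \<le> (1/40)^T * real (card (Err (seq 0))) + 160/39 * \<gamma> * real n"
    using iterate[where seq=seq and T=T and t=T, OF l0 e0] steps unfolding T_def by auto
  have lnT: "ln (real n) \<le> real T"
  proof -
    have "0 \<le> ln (real n)" using npos by simp
    then have "ln (real n) \<le> 10 * ln (real n)" by simp
    also have "\<dots> \<le> real T" unfolding T_def by linarith
    finally show ?thesis .
  qed
  have n40: "real n \<le> 40^T"
  proof -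
    have "real n = exp (ln (real n))" using nr by simp
    also have "\<dots> \<le> exp (real T)" using lnT by simp
    also have "\<dots> = exp 1 ^ T" using exp_of_nat_mult[of T 1] by simp
    also have "\<dots> \<le> 40^T" using exp_le by (intro power_mono) auto
    finally show ?thesis .
  qed
  have eps: "(1/40)^T * real (card (Err (seq 0))) \<le> 1/10^9"
  proof -
    have "(1/40)^T * real (card (Err (seq 0))) = real (card (Err (seq 0))) / 40^T" by (simp add: power_one_over)
    also have "\<dots> \<le> real (card (Err (seq 0))) / real n" using n40 nr by (intro divide_left_mono) auto
    also have "\<dots> \<le> 0.1 * \<zeta>" using e0 nr by (simp add: divide_le_eq)
    also have "\<dots> \<le> 1/10^9" using zeta_small by simp
    finally show ?thesis .
  qed
  have eT: "real (card (Err (seq T))) \<le> 8 * \<gamma> * real n"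
  proof (cases "card (Err (seq T)) = 0")
    case True then show ?thesis using gam0 by simp
  next
    case False
    then have ge1: "1 \<le> real (card (Err (seq T)))" by simp
    define g where "g = \<gamma> * real n"
    define ep where "ep = (1/40)^T * real (card (Err (seq 0)))"
    have ep0: "0 \<le> ep" unfolding ep_def by simp
    have ep1: "ep \<le> 1/1000000000" using eps unfolding ep_def by simp
    have i2: "real (card (Err (seq T))) \<le> ep + 160/39 * g" using it unfolding ep_def g_def by (simp add: mult.assoc)
    have "real (card (Err (seq T))) \<le> 8 * g" using i2 ep0 ep1 ge1 by linarith
    then show ?thesis unfolding g_def by (simp add: mult.assoc)
  qed
  have agT: "real (agreements n lout lt) + real (card (Err (seq T))) = real n"
  proof -
    have "{i. i < n \<and> lout i = lt i} = {i. i < n \<and> seq T i = lt i}" using sT unfolding T_def by auto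
    moreover have "Err (seq T) = {i. i < n \<and> \<not> seq T i = lt i}" unfolding Err_def by auto
    ultimately show ?thesis unfolding agreements_def using card_split_n[of n "\<lambda>i. seq T i = lt i"]
      by (simp flip: of_nat_add)
  qed
  show ?thesis using agT eT by (simp add: algebra_simps)
qed

theorem mainTheorem14:
  fixes n :: nat and A F :: "nat \<Rightarrow> nat \<Rightarrow> real"
    and \<zeta> d K \<gamma> :: real and S :: "nat set"
    and linit lt lout :: "nat \<Rightarrow> real"
  assumes "0 < \<zeta>" "\<zeta> < 1" "0 < d" "K \<ge> 10^4"
    and "is_labelling n linit" "is_labelling n lt"
    and "S \<subseteq> {..<n}" "real (card S) \<ge> (1 - \<gamma>) * real n" "\<gamma> \<le> 0.1 * \<zeta>"
    and "real (agreements n linit lt) \<ge> (1 - 0.1 * \<zeta>) * real n"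
    and "\<forall>i\<in>S. \<forall>j\<in>S. F i j * (lt i * lt j) \<ge> 0"
    and "\<exists>Y Z. (\<forall>i\<in>S. \<forall>j\<in>S. A i j - F i j = Y i j + Z i j) \<and>
               op_norm_on S Y \<le> K * d \<and>
               (\<forall>i\<in>S. \<forall>j\<in>S. \<bar>Z i j\<bar> \<le> K * d / (\<zeta> * real n))"
    and "\<forall>T. T \<subseteq> S \<and> real (card T) \<ge> (1 - \<zeta>) * real n \<longrightarrow>
           resolvable_on T (\<lambda>i j. (A i j - F i j) * (lt i * lt j))
             (10 * d * K^3) (0.5 * d * K * (\<gamma> + (real n - real (card T)) / real n))"
    and "boosting_output n A \<zeta> d K linit lout"
  shows "real (agreements n lout lt) \<ge> (1 - 8 * \<gamma>) * real n"
  proof (cases "n = 0")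
  case True
  then show ?thesis by simp
next
  case False
  obtain Y Z where YZ: "(\<forall>i\<in>S. \<forall>j\<in>S. A i j - F i j = Y i j + Z i j)" "op_norm_on S Y \<le> K * d"
    "(\<forall>i\<in>S. \<forall>j\<in>S. \<bar>Z i j\<bar> \<le> K * d / (\<zeta> * real n))"
    using assms(12) by blast
  have "bs n A F Y Z \<zeta> d K \<gamma> S lt"
    by (unfold_locales) (use assms YZ False in auto)
  then show ?thesis using main_pos assms(5,10,14) by blast
qed

end
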